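(* Fix $\alpha\in(0,1)$ and a transient MDP with a sink state as in the context. There exists a stationary deterministic policy $\pi^\star\in\Pi_{\mathrm{SD}}$ that attains the supremum in \[ \sup_{\pi\in\Pi_{\mathrm{HR}}}\liminf_{t\to\infty}\mathrm{EVaR}^{\pi,\mu}_\alpha\Big[\sum_{k=0}^t r(\tilde s_k,\tilde a_k,\tilde s_{k+1})\Big]. \]
   Context: MDP: states $\bar{\mathcal S}=\{1,\dots,S,S+1\}$, $e:=S+1$ a sink state, $\mathcal S=\{1,\dots,S\}$; finite actions; transitions $p(s,a,s')$, real rewards $r(s,a,s')$ of arbitrary sign; $p(e,a,e)=1$, $r(e,a,e)=0$; initial distribution $\mu$ on $\mathcal S$ with $\mu>0$; superscript $\pi,\mu$ indicates the process starts from $\tilde s_0\sim\mu$ and actions follow $\pi$. $\Pi_{\mathrm{HR}}$: history-dependent randomized policies; $\Pi_{\mathrm{SD}}$: stationary deterministic policies. Transience: for every $\pi\in\Pi_{\mathrm{SD}}$, $\sum_{t\ge0}\mathbb P^{\pi,s}[\tilde s_t=s']<\infty$ for all $s,s'\in\mathcal S$. $\mathrm{EVaR}_\alpha[\tilde x]=\sup_{\beta>0}\big(-\beta^{-1}\log\mathbb E[e^{-\beta\tilde x}]+\beta^{-1}\log\alpha\big)$. *)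

theory Defs
  imports "HOL-Probability.Probability"
begin

text \<open>
  MDP with states 1..S (transient states) and the sink state e = S+1.
  Actions form a finite type 'a. Transition kernel K s a is a pmf on states,
  so p(s,a,s') = pmf (K s a) s'.
  A history-dependent randomized policy maps the past history
  [(s_0,a_0),...,(s_{t-1},a_{t-1})] together with the current state s_t
  to a distribution over actions.
\<close>

type_synonym 'a hist = "(nat \<times> 'a) list"
type_synonym 'a policy = "'a hist \<Rightarrow> nat \<Rightarrow> 'a pmf"

definition sd_policy :: "(nat \<Rightarrow> 'a) \<Rightarrow> 'a policy" where
  "sd_policy d = (\<lambda>h s. return_pmf (d s))"

fun traj :: "(nat \<Rightarrow> 'a \<Rightarrow> nat pmf) \<Rightarrow> 'a policy \<Rightarrow> nat pmf \<Rightarrow> nat \<Rightarrow> ('a hist \<times> nat) pmf" where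
  "traj K \<pi> mu 0 = map_pmf (\<lambda>s. ([], s)) mu"
| "traj K \<pi> mu (Suc n) =
     bind_pmf (traj K \<pi> mu n) (\<lambda>(h, s).
       bind_pmf (\<pi> h s) (\<lambda>a. map_pmf (\<lambda>s'. (h @ [(s, a)], s')) (K s a)))"

definition traj_return :: "(nat \<Rightarrow> 'a \<Rightarrow> nat \<Rightarrow> real) \<Rightarrow> 'a hist \<times> nat \<Rightarrow> real" where
  "traj_return r hs = (let h = fst hs; sts = map fst h @ [snd hs] in
      (\<Sum>k<length h. r (fst (h ! k)) (snd (h ! k)) (sts ! Suc k)))"

text \<open>Distribution of the return sum_{k=0}^t r(s_k,a_k,s_{k+1}).\<close>
definition return_dist :: "(nat \<Rightarrow> 'a \<Rightarrow> nat pmf) \<Rightarrow> (nat \<Rightarrow> 'a \<Rightarrow> nat \<Rightarrow> real)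
    \<Rightarrow> 'a policy \<Rightarrow> nat pmf \<Rightarrow> nat \<Rightarrow> real pmf" where
  "return_dist K r \<pi> mu t = map_pmf (traj_return r) (traj K \<pi> mu (Suc t))"

definition EVaR :: "real \<Rightarrow> real pmf \<Rightarrow> real" where
  "EVaR \<alpha> D = (SUP \<beta>\<in>{0<..}.
      - ln (measure_pmf.expectation D (\<lambda>x. exp (- \<beta> * x))) / \<beta> + ln \<alpha> / \<beta>)"

definition sink_mdp :: "nat \<Rightarrow> (nat \<Rightarrow> 'a \<Rightarrow> nat pmf) \<Rightarrow> (nat \<Rightarrow> 'a \<Rightarrow> nat \<Rightarrow> real) \<Rightarrow> bool" where
  "sink_mdp S K r \<longleftrightarrow>
     (\<forall>s\<in>{1..S+1}. \<forall>a. set_pmf (K s a) \<subseteq> {1..S+1}) \<and>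
     (\<forall>a. K (S+1) a = return_pmf (S+1)) \<and>
     (\<forall>a. r (S+1) a (S+1) = 0)"

definition transient :: "nat \<Rightarrow> (nat \<Rightarrow> 'a \<Rightarrow> nat pmf) \<Rightarrow> bool" where
  "transient S K \<longleftrightarrow>
     (\<forall>d :: nat \<Rightarrow> 'a. \<forall>s\<in>{1..S}. \<forall>s'\<in>{1..S}.
        summable (\<lambda>t. measure_pmf.prob (traj K (sd_policy d) (return_pmf s) t) {hs. snd hs = s'}))"

end

theory Submission
  imports Defs
begin

lemma exp_finite_sum:
  fixes f :: "'b \<Rightarrow> real"
  assumes "finite A" "set_pmf p \<subseteq> A"
  shows "measure_pmf.expectation p f = (\<Sum>x\<in>A. pmf p x * f x)"
  using integral_measure_pmf[OF assms(1), of p f] assms(2) by auto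

lemma exp_cong:
  fixes f g :: "'b \<Rightarrow> real"
  assumes "\<And>x. x \<in> set_pmf p \<Longrightarrow> f x = g x"
  shows "measure_pmf.expectation p f = measure_pmf.expectation p g"
  by (rule integral_cong_AE) (auto simp: AE_measure_pmf_iff assms)

lemma exp_mono:
  fixes f g :: "'b \<Rightarrow> real"
  assumes "finite (set_pmf p)" "\<And>x. x \<in> set_pmf p \<Longrightarrow> f x \<le> g x"
  shows "measure_pmf.expectation p f \<le> measure_pmf.expectation p g"
  using assms by (simp add: exp_finite_sum[OF assms(1) order.refl] sum_mono mult_left_mono)

lemma exp_bind:
  fixes h :: "'c \<Rightarrow> real"
  assumes "finite (set_pmf p)" "\<And>x. x \<in> set_pmf p \<Longrightarrow> finite (set_pmf (f x))"
  shows "measure_pmf.expectation (p \<bind> f) h = measure_pmf.expectation p (\<lambda>x. measure_pmf.expectation (f x) h)"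
  using pmf_expectation_bind[OF assms(1) assms(2) order.refl, where h=h]
  by (simp add: exp_finite_sum[OF assms(1) order.refl])

lemma traj_return_nil: "traj_return r ([], s) = 0"
  by (simp add: traj_return_def)

lemma traj_return_snoc: "traj_return r (h @ [(s,a)], s') = traj_return r (h, s) + r s a s'"
proof -
  have "(\<Sum>k<length h. r (fst ((h @ [(s, a)]) ! k)) (snd ((h @ [(s, a)]) ! k))
          ((map fst (h @ [(s, a)]) @ [s']) ! Suc k))
      = (\<Sum>k<length h. r (fst (h ! k)) (snd (h ! k)) ((map fst h @ [s]) ! Suc k))"
  proof (rule sum.cong[OF refl])
    fix k assume "k \<in> {..<length h}"
    then have k: "k < length h" by simp
    have "(map fst (h @ [(s, a)]) @ [s']) ! Suc k = (map fst h @ [s]) ! Suc k"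
    proof (cases "Suc k < length h")
      case True then show ?thesis by (simp add: nth_append)
    next
      case False then have "Suc k = length h" using k by simp
      then show ?thesis by (simp add: nth_append)
    qed
    then show "r (fst ((h @ [(s, a)]) ! k)) (snd ((h @ [(s, a)]) ! k)) ((map fst (h @ [(s, a)]) @ [s']) ! Suc k)
      = r (fst (h ! k)) (snd (h ! k)) ((map fst h @ [s]) ! Suc k)" using k by (simp add: nth_append)
  qed
  then show ?thesis
    by (simp add: traj_return_def Let_def nth_append)
qed



locale emdp =
  fixes S :: nat and K :: "nat \<Rightarrow> 'a::finite \<Rightarrow> nat pmf" and r :: "nat \<Rightarrow> 'a \<Rightarrow> nat \<Rightarrow> real"
    and \<mu> :: "nat pmf" and \<alpha> :: real
  assumes alpha0: "0 < \<alpha>" and alpha1: "\<alpha> < 1" and sink: "sink_mdp S K r"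
    and trans: "transient S K" and musupp: "set_pmf \<mu> = {1..S}"
begin

abbreviation St where "St \<equiv> {Suc 0..Suc S}"
abbreviation Sa where "Sa \<equiv> {Suc 0..S}"

lemma K_supp: "s \<in> St \<Longrightarrow> set_pmf (K s a) \<subseteq> St"
proof -
  assume "s \<in> St"
  moreover have "\<forall>s\<in>{1..S+1}. \<forall>a. set_pmf (K s a) \<subseteq> {1..S+1}"
    using sink unfolding sink_mdp_def by blast
  ultimately show ?thesis by (metis Suc_eq_plus1 One_nat_def)
qed

lemma K_e: "K (Suc S) a = return_pmf (Suc S)"
  using sink unfolding sink_mdp_def by auto

lemma r_e: "r (Suc S) a (Suc S) = 0"
  using sink unfolding sink_mdp_def by auto

lemma sum_K_e: "(\<Sum>s'\<in>St. pmf (K (Suc S) a) s' * g s') = g (Suc S)"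
proof -
  have "(\<Sum>s'\<in>St. pmf (K (Suc S) a) s' * g s') = (\<Sum>s'\<in>St. (if s' = Suc S then g s' else 0))"
    by (rule sum.cong) (auto simp: K_e pmf_return)
  also have "\<dots> = g (Suc S)" by (simp add: sum.delta)
  finally show ?thesis .
qed

lemma sum_K_1: "s \<in> St \<Longrightarrow> (\<Sum>s'\<in>St. pmf (K s a) s') = 1"
  by (rule sum_pmf_eq_1[OF _ K_supp]) simp_all

lemma Sa_ne: "Sa \<noteq> {}"
  using musupp set_pmf_not_empty by (metis One_nat_def)

lemma S_pos: "1 \<le> S" using Sa_ne by auto

lemma traj_supp:
  assumes "set_pmf \<nu> \<subseteq> St"
  shows "finite (set_pmf (traj K \<pi> \<nu> n)) \<and> (\<forall>hs\<in>set_pmf (traj K \<pi> \<nu> n). snd hs \<in> St)"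
proof (induction n)
  case 0
  have "finite (set_pmf \<nu>)" using assms finite_subset by blast
  then show ?case using assms by auto
next
  case (Suc n)
  have fin: "finite (set_pmf (K s a))" if "s \<in> St" for s a
    using K_supp[OF that] finite_subset by blast
  have eq: "set_pmf (traj K \<pi> \<nu> (Suc n)) \<subseteq> (\<Union>hs\<in>set_pmf (traj K \<pi> \<nu> n). \<Union>a\<in>set_pmf (\<pi> (fst hs) (snd hs)).
      (\<lambda>s'. (fst hs @ [(snd hs, a)], s')) ` set_pmf (K (snd hs) a))"
    by (auto simp: set_bind_pmf split: prod.splits)
  have "finite (\<Union>hs\<in>set_pmf (traj K \<pi> \<nu> n). \<Union>a\<in>set_pmf (\<pi> (fst hs) (snd hs)).
      (\<lambda>s'. (fst hs @ [(snd hs, a)], s')) ` set_pmf (K (snd hs) a))"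
    using Suc by (auto intro!: finite_UN_I finite_imageI fin)
  moreover have "\<forall>hs\<in>set_pmf (traj K \<pi> \<nu> (Suc n)). snd hs \<in> St"
    using eq Suc K_supp by fastforce
  ultimately show ?case using eq finite_subset by blast
qed

end

context emdp begin

definition tw :: "real \<Rightarrow> (nat \<Rightarrow> real) \<Rightarrow> nat \<Rightarrow> 'a \<Rightarrow> real" where
  "tw \<beta> w s a = (\<Sum>s'\<in>St. pmf (K s a) s' * exp (- \<beta> * r s a s') * w s')"
definition Tb :: "real \<Rightarrow> (nat \<Rightarrow> real) \<Rightarrow> nat \<Rightarrow> real" where
  "Tb \<beta> w s = Min (range (tw \<beta> w s))"
definition Td :: "real \<Rightarrow> (nat \<Rightarrow> 'a) \<Rightarrow> (nat \<Rightarrow> real) \<Rightarrow> nat \<Rightarrow> real" where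
  "Td \<beta> d w s = tw \<beta> w s (d s)"

lemma exp_split: "exp (- b * (x + y)) = exp (- b * x) * exp (- (b::real) * y)"
proof -
  have "exp (- b * (x + y)) = exp ((- b * x) + (- b * y))" by (simp add: algebra_simps)
  also have "\<dots> = exp (- b * x) * exp (- b * y)" by (rule exp_add)
  finally show ?thesis .
qed

lemma fin_K: "s \<in> St \<Longrightarrow> finite (set_pmf (K s a))"
  using K_supp finite_subset by blast

lemma traj_step:
  assumes nu: "set_pmf \<nu> \<subseteq> St"
  shows "measure_pmf.expectation (traj K \<pi> \<nu> (Suc n)) (\<lambda>hs. exp (- \<beta> * traj_return r hs) * w (snd hs)) =
    measure_pmf.expectation (traj K \<pi> \<nu> n) (\<lambda>hs. exp (- \<beta> * traj_return r hs) *
       measure_pmf.expectation (\<pi> (fst hs) (snd hs)) (\<lambda>a. tw \<beta> w (snd hs) a))"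
proof -
  define T where "T = traj K \<pi> \<nu> n"
  have fin: "finite (set_pmf T)" and inSt: "\<And>hs. hs \<in> set_pmf T \<Longrightarrow> snd hs \<in> St"
    using traj_supp[OF nu, of \<pi> n] unfolding T_def by auto
  define F where "F = (\<lambda>hs. exp (- \<beta> * traj_return r hs) * w (snd hs))"
  define G where "G = (\<lambda>(h, s). bind_pmf (\<pi> h s) (\<lambda>a. map_pmf (\<lambda>s'. (h @ [(s, a)], s')) (K s a)))"
  have finG: "finite (set_pmf (G hs))" if "hs \<in> set_pmf T" for hs
  proof -
    obtain h s where hs: "hs = (h, s)" by (cases hs)
    have "s \<in> St" using inSt[OF that] hs by simp
    then show ?thesis unfolding hs G_def
      by (auto simp: set_bind_pmf intro!: finite_UN_I finite_imageI fin_K)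
  qed
  have "measure_pmf.expectation (traj K \<pi> \<nu> (Suc n)) F = measure_pmf.expectation (T \<bind> G) F"
    by (simp add: T_def G_def)
  also have "\<dots> = measure_pmf.expectation T (\<lambda>hs. measure_pmf.expectation (G hs) F)"
    by (rule exp_bind[OF fin finG])
  also have "\<dots> = measure_pmf.expectation T (\<lambda>hs. exp (- \<beta> * traj_return r hs) *
       measure_pmf.expectation (\<pi> (fst hs) (snd hs)) (\<lambda>a. tw \<beta> w (snd hs) a))"
  proof (rule exp_cong)
    fix hs assume hsT: "hs \<in> set_pmf T"
    obtain h s where hs: "hs = (h, s)" by (cases hs)
    have sSt: "s \<in> St" using inSt[OF hsT] hs by simp
    have "measure_pmf.expectation (G hs) F = measure_pmf.expectation (\<pi> h s)
        (\<lambda>a. measure_pmf.expectation (map_pmf (\<lambda>s'. (h @ [(s, a)], s')) (K s a)) F)"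
      unfolding hs G_def by (simp add: exp_bind finite_subset[OF subset_UNIV] fin_K[OF sSt])
    also have "\<dots> = measure_pmf.expectation (\<pi> h s) (\<lambda>a. exp (- \<beta> * traj_return r (h, s)) * tw \<beta> w s a)"
    proof (rule exp_cong)
      fix a
      have "measure_pmf.expectation (map_pmf (\<lambda>s'. (h @ [(s, a)], s')) (K s a)) F
          = measure_pmf.expectation (K s a) (\<lambda>s'. F (h @ [(s, a)], s'))" by simp
      also have "\<dots> = (\<Sum>s'\<in>St. pmf (K s a) s' * F (h @ [(s, a)], s'))"
        by (rule exp_finite_sum) (use K_supp[OF sSt] in auto)
      also have "\<dots> = (\<Sum>s'\<in>St. exp (- \<beta> * traj_return r (h, s)) * (pmf (K s a) s' * exp (- \<beta> * r s a s') * w s'))"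
        proof (rule sum.cong[OF refl])
          fix s' show "pmf (K s a) s' * F (h @ [(s, a)], s') = exp (- \<beta> * traj_return r (h, s)) * (pmf (K s a) s' * exp (- \<beta> * r s a s') * w s')"
            unfolding F_def traj_return_snoc exp_split by simp
        qed
      also have "\<dots> = exp (- \<beta> * traj_return r (h, s)) * tw \<beta> w s a"
        by (simp only: tw_def sum_distrib_left)
      finally show "measure_pmf.expectation (map_pmf (\<lambda>s'. (h @ [(s, a)], s')) (K s a)) F
          = exp (- \<beta> * traj_return r (h, s)) * tw \<beta> w s a" .
    qed
    also have "\<dots> = exp (- \<beta> * traj_return r (h, s)) * measure_pmf.expectation (\<pi> h s) (\<lambda>a. tw \<beta> w s a)"
      by simp
    finally show "measure_pmf.expectation (G hs) F = exp (- \<beta> * traj_return r hs) *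
       measure_pmf.expectation (\<pi> (fst hs) (snd hs)) (\<lambda>a. tw \<beta> w (snd hs) a)" by (simp add: hs)
  qed
  finally show ?thesis unfolding F_def T_def .
qed

end

context emdp begin

definition mud :: "(nat \<Rightarrow> real) \<Rightarrow> real" where
  "mud f = (\<Sum>s\<in>Sa. pmf \<mu> s * f s)"

lemma exp_mu: "measure_pmf.expectation \<mu> f = mud f"
  unfolding mud_def by (rule exp_finite_sum) (auto simp: musupp)

lemma mu_St: "set_pmf \<mu> \<subseteq> St" using musupp by auto

lemma fin_pi: "finite (set_pmf (p :: 'a pmf))"
  by (rule finite_subset[OF subset_UNIV]) simp

lemma Tb_le: "Tb \<beta> w s \<le> tw \<beta> w s a"
  unfolding Tb_def by (rule Min_le) auto

lemma DP_Tb: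
  assumes nu: "set_pmf \<nu> \<subseteq> St"
  shows "measure_pmf.expectation \<nu> ((Tb \<beta> ^^ (n + m)) w) \<le>
    measure_pmf.expectation (traj K \<pi> \<nu> n) (\<lambda>hs. exp (- \<beta> * traj_return r hs) * (Tb \<beta> ^^ m) w (snd hs))"
proof (induction n arbitrary: m)
  case 0
  then show ?case by (simp add: traj_return_nil)
next
  case (Suc n)
  have fin: "finite (set_pmf (traj K \<pi> \<nu> n))" using traj_supp[OF nu] by blast
  have "measure_pmf.expectation \<nu> ((Tb \<beta> ^^ (Suc n + m)) w) = measure_pmf.expectation \<nu> ((Tb \<beta> ^^ (n + Suc m)) w)"
    by simp
  also have "\<dots> \<le> measure_pmf.expectation (traj K \<pi> \<nu> n) (\<lambda>hs. exp (- \<beta> * traj_return r hs) * (Tb \<beta> ^^ Suc m) w (snd hs))"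
    by (rule Suc.IH)
  also have "\<dots> \<le> measure_pmf.expectation (traj K \<pi> \<nu> n) (\<lambda>hs. exp (- \<beta> * traj_return r hs) *
       measure_pmf.expectation (\<pi> (fst hs) (snd hs)) (\<lambda>a. tw \<beta> ((Tb \<beta> ^^ m) w) (snd hs) a))"
  proof (rule exp_mono[OF fin])
    fix hs
    have "(Tb \<beta> ^^ Suc m) w (snd hs) = measure_pmf.expectation (\<pi> (fst hs) (snd hs)) (\<lambda>a. (Tb \<beta> ^^ Suc m) w (snd hs))"
      by simp
    also have "\<dots> \<le> measure_pmf.expectation (\<pi> (fst hs) (snd hs)) (\<lambda>a. tw \<beta> ((Tb \<beta> ^^ m) w) (snd hs) a)"
      by (rule exp_mono[OF fin_pi]) (simp add: Tb_le)
    finally show "exp (- \<beta> * traj_return r hs) * (Tb \<beta> ^^ Suc m) w (snd hs) \<le> exp (- \<beta> * traj_return r hs) *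
       measure_pmf.expectation (\<pi> (fst hs) (snd hs)) (\<lambda>a. tw \<beta> ((Tb \<beta> ^^ m) w) (snd hs) a)"
      by (simp add: mult_left_mono)
  qed
  also have "\<dots> = measure_pmf.expectation (traj K \<pi> \<nu> (Suc n)) (\<lambda>hs. exp (- \<beta> * traj_return r hs) * (Tb \<beta> ^^ m) w (snd hs))"
    by (rule traj_step[OF nu, symmetric])
  finally show ?case .
qed

lemma DP_Td:
  assumes nu: "set_pmf \<nu> \<subseteq> St"
  shows "measure_pmf.expectation (traj K (sd_policy d) \<nu> n) (\<lambda>hs. exp (- \<beta> * traj_return r hs) * (Td \<beta> d ^^ m) w (snd hs))
     = measure_pmf.expectation \<nu> ((Td \<beta> d ^^ (n + m)) w)"
proof (induction n arbitrary: m)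
  case 0
  then show ?case by (simp add: traj_return_nil)
next
  case (Suc n)
  have "measure_pmf.expectation (traj K (sd_policy d) \<nu> (Suc n)) (\<lambda>hs. exp (- \<beta> * traj_return r hs) * (Td \<beta> d ^^ m) w (snd hs))
     = measure_pmf.expectation (traj K (sd_policy d) \<nu> n) (\<lambda>hs. exp (- \<beta> * traj_return r hs) * (Td \<beta> d ^^ Suc m) w (snd hs))"
    unfolding traj_step[OF nu] by (simp add: sd_policy_def Td_def)
  also have "\<dots> = measure_pmf.expectation \<nu> ((Td \<beta> d ^^ (n + Suc m)) w)" by (rule Suc.IH)
  finally show ?case by simp
qed

definition Phi :: "'a policy \<Rightarrow> nat \<Rightarrow> real \<Rightarrow> real" where
  "Phi \<pi> t \<beta> = measure_pmf.expectation (return_dist K r \<pi> \<mu> t) (\<lambda>x. exp (- \<beta> * x))"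

lemma Phi_traj: "Phi \<pi> t \<beta> = measure_pmf.expectation (traj K \<pi> \<mu> (Suc t)) (\<lambda>hs. exp (- \<beta> * traj_return r hs) * (\<lambda>_. 1) (snd hs))"
  by (simp add: Phi_def return_dist_def)

lemma Phi_ge: "mud ((Tb \<beta> ^^ Suc t) (\<lambda>_. 1)) \<le> Phi \<pi> t \<beta>"
  using DP_Tb[OF mu_St, where \<beta>=\<beta> and n="Suc t" and m=0 and w="\<lambda>_. 1" and \<pi>=\<pi>] by (simp add: Phi_traj exp_mu)

lemma Phi_sd: "Phi (sd_policy d) t \<beta> = mud ((Td \<beta> d ^^ Suc t) (\<lambda>_. 1))"
  using DP_Td[OF mu_St, where d=d and n="Suc t" and \<beta>=\<beta> and m=0 and w="\<lambda>_. 1"] by (simp add: Phi_traj exp_mu)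

lemma fin_rd: "finite (set_pmf (return_dist K r \<pi> \<mu> t))"
  using traj_supp[OF mu_St, of \<pi> "Suc t"] by (simp add: return_dist_def)

end

context emdp begin

definition Uop :: "(nat \<Rightarrow> real) \<Rightarrow> nat \<Rightarrow> real" where
  "Uop w s = Max (range (\<lambda>a. \<Sum>s'\<in>St. pmf (K s a) s' * w s'))"
definition indS :: "nat \<Rightarrow> real" where "indS s = (if s \<in> Sa then 1 else 0)"
definition mm :: "nat \<Rightarrow> nat \<Rightarrow> real" where "mm n = (Uop ^^ n) indS"

lemma Uop_ge: "(\<Sum>s'\<in>St. pmf (K s a) s' * w s') \<le> Uop w s"
  unfolding Uop_def by (rule Max_ge) auto

lemma Uop_in: "\<exists>a. Uop w s = (\<Sum>s'\<in>St. pmf (K s a) s' * w s')"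
proof -
  have "Uop w s \<in> range (\<lambda>a. \<Sum>s'\<in>St. pmf (K s a) s' * w s')"
    unfolding Uop_def by (rule Max_in) auto
  then show ?thesis by auto
qed

lemma Uop_mono:
  assumes "\<And>s. s \<in> St \<Longrightarrow> w s \<le> w' s"
  shows "Uop w s \<le> Uop w' s"
proof -
  obtain a where a: "Uop w s = (\<Sum>s'\<in>St. pmf (K s a) s' * w s')" using Uop_in by blast
  have "(\<Sum>s'\<in>St. pmf (K s a) s' * w s') \<le> (\<Sum>s'\<in>St. pmf (K s a) s' * w' s')"
    by (rule sum_mono) (simp add: assms mult_left_mono)
  also have "\<dots> \<le> Uop w' s" by (rule Uop_ge)
  finally show ?thesis using a by simp
qed

lemma Uop_e: "Uop w (Suc S) = w (Suc S)"
  unfolding Uop_def sum_K_e by simp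

lemma Uop_scale:
  assumes "0 \<le> c"
  shows "Uop (\<lambda>s. c * w s) s = c * Uop w s"
proof -
  have mono: "mono ((*) c)" using assms by (auto intro: monoI mult_left_mono)
  have "(\<lambda>a. \<Sum>s'\<in>St. pmf (K s a) s' * (c * w s')) ` UNIV = (*) c ` ((\<lambda>a. \<Sum>s'\<in>St. pmf (K s a) s' * w s') ` UNIV)"
    by (auto simp: sum_distrib_left algebra_simps image_iff)
  then show ?thesis unfolding Uop_def using mono_Max_commute[OF mono, of "range (\<lambda>a. \<Sum>s'\<in>St. pmf (K s a) s' * w s')"]
    by simp
qed

lemma Uop_scale': "0 \<le> c \<Longrightarrow> Uop (\<lambda>s. c * w s) = (\<lambda>s. c * Uop w s)"
  by (rule ext) (rule Uop_scale)

lemma Uop_iter_mono: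
  assumes "\<And>s. s \<in> St \<Longrightarrow> w s \<le> w' s"
  shows "s \<in> St \<Longrightarrow> (Uop ^^ n) w s \<le> (Uop ^^ n) w' s"
proof (induction n arbitrary: s)
  case 0 then show ?case using assms by simp
next
  case (Suc n) show ?case unfolding funpow.simps comp_def by (rule Uop_mono) (rule Suc.IH)
qed

lemma Uop_iter_scale: "0 \<le> c \<Longrightarrow> (Uop ^^ n) (\<lambda>s. c * w s) = (\<lambda>s. c * (Uop ^^ n) w s)"
  by (induction n) (simp_all add: Uop_scale')

lemma Uop_bounds:
  assumes "s \<in> St" "\<And>s. s \<in> St \<Longrightarrow> 0 \<le> w s \<and> w s \<le> 1"
  shows "0 \<le> Uop w s \<and> Uop w s \<le> 1"
proof -
  obtain a where a: "Uop w s = (\<Sum>s'\<in>St. pmf (K s a) s' * w s')" using Uop_in by blast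
  have "(\<Sum>s'\<in>St. pmf (K s a) s' * w s') \<le> (\<Sum>s'\<in>St. pmf (K s a) s')"
    by (rule sum_mono) (use assms(2) in \<open>auto intro: mult_left_le\<close>)
  also have "\<dots> = 1" by (rule sum_K_1[OF assms(1)])
  finally have "Uop w s \<le> 1" using a by simp
  moreover have "0 \<le> Uop w s" unfolding a by (rule sum_nonneg) (use assms(2) in auto)
  ultimately show ?thesis by simp
qed

lemma mm_bounds: "s \<in> St \<Longrightarrow> 0 \<le> mm n s \<and> mm n s \<le> 1"
proof (induction n arbitrary: s)
  case 0 then show ?case by (simp add: mm_def indS_def)
next
  case (Suc n)
  have "mm (Suc n) s = Uop (mm n) s" by (simp add: mm_def)
  then show ?case using Uop_bounds[OF Suc.prems Suc.IH] by simp
qed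

lemma mm_e: "mm n (Suc S) = 0"
  by (induction n) (simp_all add: mm_def indS_def Uop_e)

lemma mm_Suc: "mm (Suc n) = Uop (mm n)"
  by (simp add: mm_def)

lemma mm_dec: "s \<in> St \<Longrightarrow> mm (Suc n) s \<le> mm n s"
proof -
  assume s: "s \<in> St"
  have 1: "Uop indS s \<le> indS s" if "s \<in> St" for s
  proof (cases "s = Suc S")
    case True then show ?thesis by (simp add: Uop_e)
  next
    case False then have "s \<in> Sa" using that by auto
    then show ?thesis using Uop_bounds[OF that, of indS] by (simp add: indS_def)
  qed
  have "mm (Suc n) s = (Uop ^^ n) (Uop indS) s" by (simp add: mm_def funpow_Suc_right del: funpow.simps)
  also have "\<dots> \<le> (Uop ^^ n) indS s" by (rule Uop_iter_mono[OF 1 s])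
  finally show ?thesis by (simp add: mm_def)
qed

definition Gset :: "nat \<Rightarrow> nat set" where "Gset n = {s \<in> St. mm n s = 1}"

lemma mm_one:
  assumes s: "s \<in> St" and one: "mm (Suc n) s = 1"
  shows "\<exists>a. set_pmf (K s a) \<subseteq> Gset n"
proof -
  obtain a where a: "mm (Suc n) s = (\<Sum>s'\<in>St. pmf (K s a) s' * mm n s')"
    using Uop_in mm_Suc by metis
  have "(\<Sum>s'\<in>St. pmf (K s a) s' * (1 - mm n s')) = (\<Sum>s'\<in>St. pmf (K s a) s') - (\<Sum>s'\<in>St. pmf (K s a) s' * mm n s')"
    by (simp add: algebra_simps sum_subtractf)
  also have "\<dots> = 0" using sum_K_1[OF s] a one by simp
  finally have "\<forall>s'\<in>St. pmf (K s a) s' * (1 - mm n s') = 0"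
    by (subst sum_nonneg_eq_0_iff[symmetric]) (auto intro!: mult_nonneg_nonneg simp: mm_bounds)
  then have "set_pmf (K s a) \<subseteq> Gset n" using K_supp[OF s] by (auto simp: Gset_def set_pmf_eq subset_iff)
  then show ?thesis by blast
qed

lemma Gset_Suc: "Gset (Suc n) \<subseteq> Gset n"
proof
  fix s assume "s \<in> Gset (Suc n)"
  then have s: "s \<in> St" and "mm (Suc n) s = 1" unfolding Gset_def by auto
  then have "mm n s = 1" using mm_dec[OF s, of n] mm_bounds[OF s, of n] by linarith
  then show "s \<in> Gset n" using s unfolding Gset_def by auto
qed

lemma Gset_anti: "n \<le> m \<Longrightarrow> Gset m \<subseteq> Gset n"
  by (induction m rule: dec_induct) (use Gset_Suc in blast)+

lemma Gset_Sa: "Gset n \<subseteq> Sa"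
  using mm_e unfolding Gset_def by (auto simp: le_Suc_eq)

lemma no_closed:
  assumes G: "G \<subseteq> Sa" "G \<noteq> {}" and cl: "\<forall>s\<in>G. \<exists>a. set_pmf (K s a) \<subseteq> G"
  shows False
proof -
  define d where "d s = (SOME a. set_pmf (K s a) \<subseteq> G)" for s
  have d: "set_pmf (K s (d s)) \<subseteq> G" if "s \<in> G" for s
    unfolding d_def using cl that by (metis someI_ex)
  obtain s0 where s0: "s0 \<in> G" using G by blast
  have inG: "\<forall>hs\<in>set_pmf (traj K (sd_policy d) (return_pmf s0) t). snd hs \<in> G" for t
  proof (induction t)
    case 0 then show ?case using s0 by simp
  next
    case (Suc t) then show ?case using d by (fastforce simp: set_bind_pmf sd_policy_def)
  qed
  have finG: "finite G" using G(1) finite_subset by blast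
  have one: "(\<Sum>s'\<in>G. measure_pmf.prob (traj K (sd_policy d) (return_pmf s0) t) {hs. snd hs = s'}) = 1" for t
  proof -
    have "(\<Sum>s'\<in>G. measure_pmf.prob (traj K (sd_policy d) (return_pmf s0) t) {hs. snd hs = s'})
        = (\<Sum>s'\<in>G. pmf (map_pmf snd (traj K (sd_policy d) (return_pmf s0) t)) s')"
      by (rule sum.cong) (auto simp: pmf_map vimage_def)
    also have "\<dots> = 1" by (rule sum_pmf_eq_1[OF finG]) (use inG in auto)
    finally show ?thesis .
  qed
  have "\<forall>s'\<in>G. summable (\<lambda>t. measure_pmf.prob (traj K (sd_policy d) (return_pmf s0) t) {hs. snd hs = s'})"
    using trans G(1) s0 unfolding transient_def One_nat_def by blast
  then have "summable (\<lambda>t. \<Sum>s'\<in>G. measure_pmf.prob (traj K (sd_policy d) (return_pmf s0) t) {hs. snd hs = s'})"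
    by (intro summable_sum) auto
  then show False unfolding one by (simp add: summable_const_iff)
qed

lemma mm_S_lt: "s \<in> Sa \<Longrightarrow> mm S s < 1"
proof (rule ccontr)
  assume s: "s \<in> Sa" and "\<not> mm S s < 1"
  then have "mm S s = 1" using mm_bounds[of s S] by auto
  then have "s \<in> Gset S" using s unfolding Gset_def by auto
  then have GS: "Gset S \<noteq> {}" by blast
  have "\<exists>n<S. Gset (Suc n) = Gset n"
  proof (rule ccontr)
    assume "\<not> (\<exists>n<S. Gset (Suc n) = Gset n)"
    then have strict: "n < S \<Longrightarrow> Gset (Suc n) \<subset> Gset n" for n using Gset_Suc by blast
    have fin: "finite (Gset n)" for n using Gset_Sa finite_subset by blast
    have "n \<le> S \<Longrightarrow> card (Gset n) + n \<le> S" for n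
    proof (induction n)
      case 0 then show ?case using card_mono[OF _ Gset_Sa[of 0]] by simp
    next
      case (Suc n)
      then have "card (Gset (Suc n)) < card (Gset n)" using psubset_card_mono[OF fin strict] by simp
      then show ?case using Suc by simp
    qed
    then have "card (Gset S) = 0" by fastforce
    then show False using GS fin by simp
  qed
  then obtain n where n: "n < S" "Gset (Suc n) = Gset n" by blast
  have "Gset S \<subseteq> Gset n" using Gset_anti n by simp
  then have ne: "Gset n \<noteq> {}" using GS by blast
  have "\<forall>s\<in>Gset n. \<exists>a. set_pmf (K s a) \<subseteq> Gset n"
  proof
    fix s assume "s \<in> Gset n"
    then have "s \<in> Gset (Suc n)" using n by simp
    then show "\<exists>a. set_pmf (K s a) \<subseteq> Gset n" using mm_one unfolding Gset_def by blast
  qed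
  then show False using no_closed[OF Gset_Sa ne] by blast
qed

definition dl :: real where "dl = 1 - Max (mm S ` Sa)"

lemma dl_pos: "0 < dl" and dl_le1: "dl \<le> 1"
proof -
  have "Max (mm S ` Sa) \<in> mm S ` Sa" by (rule Max_in) (use Sa_ne in auto)
  then show "0 < dl" unfolding dl_def using mm_S_lt by auto
  obtain s where "s \<in> Sa" using Sa_ne by blast
  moreover have "mm S s \<le> Max (mm S ` Sa)" by (rule Max_ge) (use \<open>s \<in> Sa\<close> in auto)
  moreover have "s \<in> St" using \<open>s \<in> Sa\<close> by auto
  ultimately have "0 \<le> Max (mm S ` Sa)" using mm_bounds[of s S] by linarith
  then show "dl \<le> 1" unfolding dl_def by simp
qed

lemma mm_S_le: "s \<in> St \<Longrightarrow> mm S s \<le> 1 - dl"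
proof -
  assume s: "s \<in> St"
  show ?thesis
  proof (cases "s = Suc S")
    case True then show ?thesis using mm_e dl_le1 by simp
  next
    case False then have "s \<in> Sa" using s by auto
    then show ?thesis unfolding dl_def by (simp add: Max_ge)
  qed
qed

end


lemma jensen_exp:
  fixes p y :: "'b \<Rightarrow> real"
  assumes "finite A" "\<And>x. x \<in> A \<Longrightarrow> 0 \<le> p x" "(\<Sum>x\<in>A. p x) = 1"
  shows "exp (\<Sum>x\<in>A. p x * y x) \<le> (\<Sum>x\<in>A. p x * exp (y x))"
proof -
  define m where "m = (\<Sum>x\<in>A. p x * y x)"
  have "\<And>x. exp m * (1 + (y x - m)) \<le> exp (y x)"
  proof -
    fix x
    have "exp m * (1 + (y x - m)) \<le> exp m * exp (y x - m)"
      by (rule mult_left_mono) (simp_all add: exp_ge_add_one_self)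
    also have "\<dots> = exp (y x)" by (simp add: exp_diff)
    finally show "exp m * (1 + (y x - m)) \<le> exp (y x)" .
  qed
  then have "(\<Sum>x\<in>A. p x * (exp m * (1 + (y x - m)))) \<le> (\<Sum>x\<in>A. p x * exp (y x))"
    by (intro sum_mono mult_left_mono) (simp_all add: assms(2))
  moreover have "(\<Sum>x\<in>A. p x * (exp m * (1 + (y x - m)))) = exp m * ((\<Sum>x\<in>A. p x) + (\<Sum>x\<in>A. p x * y x) - m * (\<Sum>x\<in>A. p x))"
    by (simp add: algebra_simps sum.distrib sum_subtractf sum_distrib_left)
  ultimately show ?thesis using assms(3) unfolding m_def by simp
qed

declare sum.cl_ivl_Suc[simp del]

context emdp begin

lemma mud_mono: "(\<And>s. s \<in> Sa \<Longrightarrow> f s \<le> g s) \<Longrightarrow> mud f \<le> mud g"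
  unfolding mud_def by (intro sum_mono mult_left_mono) auto

lemma sum_mu: "(\<Sum>s\<in>Sa. pmf \<mu> s) = 1"
  by (rule sum_pmf_eq_1) (auto simp: musupp)

lemma mud_const: "mud (\<lambda>_. c) = c"
  unfolding mud_def sum_distrib_right[symmetric] sum_mu by simp

lemma mud_add: "mud (\<lambda>s. f s + g s) = mud f + mud g"
  unfolding mud_def by (simp add: algebra_simps sum.distrib)

lemma mud_pos: "s \<in> Sa \<Longrightarrow> 0 < pmf \<mu> s"
  using musupp pmf_positive by (metis One_nat_def)

lemma mm_shift: "s \<in> St \<Longrightarrow> mm (S + j) s \<le> (1 - dl) * mm j s"
proof -
  assume s: "s \<in> St"
  have 1: "mm S s' \<le> (1 - dl) * indS s'" if "s' \<in> St" for s'
  proof (cases "s' = Suc S")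
    case True then show ?thesis by (simp add: mm_e indS_def)
  next
    case False then have "s' \<in> Sa" using that by auto
    then show ?thesis using mm_S_le[OF that] by (simp add: indS_def)
  qed
  have "mm (S + j) s = (Uop ^^ j) (mm S) s" by (simp add: mm_def funpow_add add.commute[of S j])
  also have "\<dots> \<le> (Uop ^^ j) (\<lambda>s'. (1 - dl) * indS s') s" by (rule Uop_iter_mono[OF 1 s])
  also have "\<dots> = (1 - dl) * mm j s" using dl_le1 by (simp add: Uop_iter_scale mm_def)
  finally show ?thesis .
qed

lemma sum_split_S: "(\<Sum>k<S + n. f k) = (\<Sum>k<S. f k) + (\<Sum>j<n. f (S + j))" for f :: "nat \<Rightarrow> real"
  by (induction n) (simp_all add: add.assoc)

lemma Y_bound: "s \<in> St \<Longrightarrow> (\<Sum>k<n. mm k s) \<le> S / dl"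
proof -
  assume s: "s \<in> St"
  have nn: "0 \<le> mm k s" for k using mm_bounds[OF s] by simp
  have "(\<Sum>k<S. mm k s) \<le> of_nat (card {..<S}) * 1"
    by (rule sum_bounded_above) (use mm_bounds[OF s] in auto)
  then have a: "(\<Sum>k<S. mm k s) \<le> S" by simp
  have b: "(\<Sum>j<n. mm (S + j) s) \<le> (1 - dl) * (\<Sum>j<n. mm j s)"
    unfolding sum_distrib_left by (rule sum_mono) (rule mm_shift[OF s])
  have c: "(\<Sum>j<n. mm j s) \<le> (\<Sum>k<S + n. mm k s)"
    by (rule sum_mono2) (auto simp: nn)
  have "(\<Sum>k<S + n. mm k s) \<le> S + (1 - dl) * (\<Sum>k<S + n. mm k s)"
    using a b c mult_left_mono[OF c, of "1 - dl"] dl_le1 unfolding sum_split_S by linarith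
  then have "dl * (\<Sum>k<S + n. mm k s) \<le> S" by (simp add: algebra_simps)
  then have "(\<Sum>k<S + n. mm k s) \<le> S / dl" using dl_pos by (simp add: field_simps)
  moreover have "(\<Sum>k<n. mm k s) \<le> (\<Sum>k<S + n. mm k s)"
    by (rule sum_mono2) (auto simp: nn)
  ultimately show ?thesis by linarith
qed

definition Vop :: "(nat \<Rightarrow> real) \<Rightarrow> nat \<Rightarrow> real" where
  "Vop w s = Max (range (\<lambda>a. \<Sum>s'\<in>St. pmf (K s a) s' * (r s a s' + w s')))"
definition Vf :: "nat \<Rightarrow> nat \<Rightarrow> real" where "Vf n = (Vop ^^ n) (\<lambda>_. 0)"
definition RR :: real where "RR = Max ((\<lambda>(s, a, s'). \<bar>r s a s'\<bar>) ` (St \<times> UNIV \<times> St))"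

lemma RR_ge: "s \<in> St \<Longrightarrow> s' \<in> St \<Longrightarrow> \<bar>r s a s'\<bar> \<le> RR"
proof -
  assume "s \<in> St" "s' \<in> St"
  then have "(s, a, s') \<in> St \<times> UNIV \<times> St" by auto
  then have "\<bar>r s a s'\<bar> \<in> (\<lambda>(s, a, s'). \<bar>r s a s'\<bar>) ` (St \<times> UNIV \<times> St)"
    by (rule rev_image_eqI) simp
  then show ?thesis unfolding RR_def by (rule Max_ge[rotated]) simp
qed

lemma RR_nn: "0 \<le> RR"
  using RR_ge[of 1 1] by fastforce

lemma Vop_in: "\<exists>a. Vop w s = (\<Sum>s'\<in>St. pmf (K s a) s' * (r s a s' + w s'))"
proof -
  have "Vop w s \<in> range (\<lambda>a. \<Sum>s'\<in>St. pmf (K s a) s' * (r s a s' + w s'))"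
    unfolding Vop_def by (rule Max_in) auto
  then show ?thesis by auto
qed

lemma Vop_ge: "(\<Sum>s'\<in>St. pmf (K s a) s' * (r s a s' + w s')) \<le> Vop w s"
  unfolding Vop_def by (rule Max_ge) auto

lemma V_bound: "s \<in> St \<Longrightarrow> Vf n s \<le> RR * (\<Sum>k<n. mm k s)"
proof (induction n arbitrary: s)
  case 0 then show ?case by (simp add: Vf_def)
next
  case (Suc n)
  have s: "s \<in> St" by fact
  obtain a where a: "Vf (Suc n) s = (\<Sum>s'\<in>St. pmf (K s a) s' * (r s a s' + Vf n s'))"
    using Vop_in by (simp add: Vf_def) blast
  have r1: "(\<Sum>s'\<in>St. pmf (K s a) s' * r s a s') \<le> RR * indS s"
  proof (cases "s = Suc S")
    case True then show ?thesis by (simp add: sum_K_e r_e indS_def)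
  next
    case False then have "s \<in> Sa" using s by auto
    have "(\<Sum>s'\<in>St. pmf (K s a) s' * r s a s') \<le> (\<Sum>s'\<in>St. pmf (K s a) s' * RR)"
      by (intro sum_mono mult_left_mono) (use RR_ge[OF s] in \<open>auto dest: abs_le_D1\<close>)
    also have "\<dots> = RR" using sum_K_1[OF s] by (simp add: sum_distrib_right[symmetric])
    finally show ?thesis using \<open>s \<in> Sa\<close> by (simp add: indS_def)
  qed
  have "(\<Sum>s'\<in>St. pmf (K s a) s' * Vf n s') \<le> (\<Sum>s'\<in>St. pmf (K s a) s' * (RR * (\<Sum>k<n. mm k s')))"
    by (intro sum_mono mult_left_mono) (simp_all add: Suc.IH)
  also have "\<dots> = RR * (\<Sum>s'\<in>St. \<Sum>k<n. pmf (K s a) s' * mm k s')"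
    by (simp add: sum_distrib_left algebra_simps)
  also have "\<dots> = RR * (\<Sum>k<n. (\<Sum>s'\<in>St. pmf (K s a) s' * mm k s'))"
    by (subst sum.swap) (rule refl)
  also have "\<dots> \<le> RR * (\<Sum>k<n. mm (Suc k) s)"
    by (intro mult_left_mono sum_mono) (simp_all add: RR_nn mm_Suc Uop_ge)
  finally have r2: "(\<Sum>s'\<in>St. pmf (K s a) s' * Vf n s') \<le> RR * (\<Sum>k<n. mm (Suc k) s)" .
  have "Vf (Suc n) s = (\<Sum>s'\<in>St. pmf (K s a) s' * r s a s') + (\<Sum>s'\<in>St. pmf (K s a) s' * Vf n s')"
    unfolding a by (simp add: algebra_simps sum.distrib)
  also have "\<dots> \<le> RR * indS s + RR * (\<Sum>k<n. mm (Suc k) s)" using r1 r2 by linarith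
  also have "\<dots> = RR * (\<Sum>k<Suc n. mm k s)"
  proof -
    have "(\<Sum>k<Suc n. mm k s) = mm 0 s + (\<Sum>k<n. mm (Suc k) s)" by (rule sum.lessThan_Suc_shift)
    moreover have "mm 0 s = indS s" by (simp add: mm_def)
    ultimately show ?thesis by (simp add: distrib_left)
  qed
  finally show ?case .
qed

definition Vmax :: real where "Vmax = RR * S / dl"

lemma Vf_le: "s \<in> St \<Longrightarrow> Vf n s \<le> Vmax"
  using V_bound[of s n] mult_left_mono[OF Y_bound[of s n] RR_nn] unfolding Vmax_def by simp

lemma W_exp:
  assumes b: "0 \<le> \<beta>"
  shows "s \<in> St \<Longrightarrow> exp (- \<beta> * Vf n s) \<le> (Tb \<beta> ^^ n) (\<lambda>_. 1) s"
proof (induction n arbitrary: s)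
  case 0 then show ?case by (simp add: Vf_def)
next
  case (Suc n)
  have s: "s \<in> St" by fact
  have "Tb \<beta> ((Tb \<beta> ^^ n) (\<lambda>_. 1)) s \<in> range (tw \<beta> ((Tb \<beta> ^^ n) (\<lambda>_. 1)) s)"
    unfolding Tb_def by (rule Min_in) auto
  then obtain a where a: "(Tb \<beta> ^^ Suc n) (\<lambda>_. 1) s = tw \<beta> ((Tb \<beta> ^^ n) (\<lambda>_. 1)) s a" by auto
  have "exp (- \<beta> * Vf (Suc n) s) \<le> exp (- \<beta> * (\<Sum>s'\<in>St. pmf (K s a) s' * (r s a s' + Vf n s')))"
    using Vop_ge[of s a "Vf n"] b by (simp add: Vf_def mult_left_mono)
  also have "\<dots> = exp (\<Sum>s'\<in>St. pmf (K s a) s' * (- \<beta> * (r s a s' + Vf n s')))"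
    by (simp add: sum_distrib_left algebra_simps)
  also have "\<dots> \<le> (\<Sum>s'\<in>St. pmf (K s a) s' * exp (- \<beta> * (r s a s' + Vf n s')))"
    by (rule jensen_exp) (simp_all add: sum_K_1[OF s])
  also have "\<dots> = (\<Sum>s'\<in>St. pmf (K s a) s' * exp (- \<beta> * r s a s') * exp (- \<beta> * Vf n s'))"
    by (rule sum.cong[OF refl]) (simp only: exp_split mult.assoc)
  also have "\<dots> \<le> (\<Sum>s'\<in>St. pmf (K s a) s' * exp (- \<beta> * r s a s') * (Tb \<beta> ^^ n) (\<lambda>_. 1) s')"
    apply (rule sum_mono) apply (rule mult_left_mono) apply (rule Suc.IH) by simp_all
  also have "\<dots> = (Tb \<beta> ^^ Suc n) (\<lambda>_. 1) s" unfolding a tw_def ..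
  finally show ?case .
qed

lemma Phi_lb: "0 \<le> \<beta> \<Longrightarrow> exp (- \<beta> * Vmax) \<le> Phi \<pi> t \<beta>"
proof -
  assume b: "0 \<le> \<beta>"
  have "exp (- \<beta> * Vmax) = mud (\<lambda>_. exp (- \<beta> * Vmax))" by (simp add: mud_const)
  also have "\<dots> \<le> mud ((Tb \<beta> ^^ Suc t) (\<lambda>_. 1))"
  proof (rule mud_mono)
    fix s assume "s \<in> Sa" then have s: "s \<in> St" by auto
    have "exp (- \<beta> * Vmax) \<le> exp (- \<beta> * Vf (Suc t) s)" using Vf_le[OF s] b by (simp add: mult_left_mono)
    also have "\<dots> \<le> (Tb \<beta> ^^ Suc t) (\<lambda>_. 1) s" by (rule W_exp[OF b s])
    finally show "exp (- \<beta> * Vmax) \<le> (Tb \<beta> ^^ Suc t) (\<lambda>_. 1) s" .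
  qed
  also have "\<dots> \<le> Phi \<pi> t \<beta>" by (rule Phi_ge)
  finally show ?thesis .
qed

end

context emdp begin

definition z0 :: "nat \<Rightarrow> real" where "z0 s = (if s = Suc S then 1 else 0)"
definition zz :: "real \<Rightarrow> nat \<Rightarrow> nat \<Rightarrow> real" where "zz \<beta> n = (Tb \<beta> ^^ n) z0"

lemma tw_e: "tw \<beta> w (Suc S) a = w (Suc S)"
  unfolding tw_def using sum_K_e[of a "\<lambda>s'. exp (- \<beta> * r (Suc S) a s') * w s'"]
  by (simp add: r_e mult.assoc)

lemma Tb_e: "Tb \<beta> w (Suc S) = w (Suc S)"
  unfolding Tb_def tw_e by simp

lemma Td_e: "Td \<beta> d w (Suc S) = w (Suc S)"
  unfolding Td_def tw_e by simp

lemma Tb_in: "\<exists>a. Tb \<beta> w s = tw \<beta> w s a"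
proof -
  have "Tb \<beta> w s \<in> range (tw \<beta> w s)" unfolding Tb_def by (rule Min_in) auto
  then show ?thesis by auto
qed

lemma tw_mono:
  assumes "\<And>s. s \<in> St \<Longrightarrow> w s \<le> w' s"
  shows "tw \<beta> w s a \<le> tw \<beta> w' s a"
  unfolding tw_def by (intro sum_mono mult_left_mono) (simp_all add: assms)

lemma Tb_mono:
  assumes "\<And>s. s \<in> St \<Longrightarrow> w s \<le> w' s"
  shows "Tb \<beta> w s \<le> Tb \<beta> w' s"
proof -
  obtain a where a: "Tb \<beta> w' s = tw \<beta> w' s a" using Tb_in by blast
  have "Tb \<beta> w s \<le> tw \<beta> w s a" by (rule Tb_le)
  also have "\<dots> \<le> tw \<beta> w' s a" by (rule tw_mono[OF assms])
  finally show ?thesis using a by simp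
qed

lemma Td_mono:
  assumes "\<And>s. s \<in> St \<Longrightarrow> w s \<le> w' s"
  shows "Td \<beta> d w s \<le> Td \<beta> d w' s"
  unfolding Td_def by (rule tw_mono[OF assms])

lemma Tb_iter_mono:
  assumes "\<And>s. s \<in> St \<Longrightarrow> w s \<le> w' s"
  shows "s \<in> St \<Longrightarrow> (Tb \<beta> ^^ n) w s \<le> (Tb \<beta> ^^ n) w' s"
proof (induction n arbitrary: s)
  case 0 then show ?case using assms by simp
next
  case (Suc n) show ?case unfolding funpow.simps comp_def by (rule Tb_mono) (rule Suc.IH)
qed

lemma Td_iter_mono:
  assumes "\<And>s. s \<in> St \<Longrightarrow> w s \<le> w' s"
  shows "s \<in> St \<Longrightarrow> (Td \<beta> d ^^ n) w s \<le> (Td \<beta> d ^^ n) w' s"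
proof (induction n arbitrary: s)
  case 0 then show ?case using assms by simp
next
  case (Suc n) show ?case unfolding funpow.simps comp_def by (rule Td_mono) (rule Suc.IH)
qed

lemma Td_add: "Td \<beta> d (\<lambda>s. f s + g s) = (\<lambda>s. Td \<beta> d f s + Td \<beta> d g s)"
  unfolding Td_def tw_def by (rule ext) (simp add: algebra_simps sum.distrib)

lemma Td_scale: "Td \<beta> d (\<lambda>s. c * f s) = (\<lambda>s. c * Td \<beta> d f s)"
  unfolding Td_def tw_def by (rule ext) (simp add: algebra_simps sum_distrib_left)

lemma Td_diff: "Td \<beta> d (\<lambda>s. f s - g s) = (\<lambda>s. Td \<beta> d f s - Td \<beta> d g s)"
  unfolding Td_def tw_def by (rule ext) (simp add: algebra_simps sum_subtractf)

lemma Td_iter_add: "(Td \<beta> d ^^ n) (\<lambda>s. f s + g s) = (\<lambda>s. (Td \<beta> d ^^ n) f s + (Td \<beta> d ^^ n) g s)"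
  by (induction n) (simp_all add: Td_add)

lemma Td_iter_scale: "(Td \<beta> d ^^ n) (\<lambda>s. c * f s) = (\<lambda>s. c * (Td \<beta> d ^^ n) f s)"
  by (induction n) (simp_all add: Td_scale)

lemma Td_iter_diff: "(Td \<beta> d ^^ n) (\<lambda>s. f s - g s) = (\<lambda>s. (Td \<beta> d ^^ n) f s - (Td \<beta> d ^^ n) g s)"
  by (induction n) (simp_all add: Td_diff)

lemma Td_iter_e: "(Td \<beta> d ^^ n) w (Suc S) = w (Suc S)"
  by (induction n) (simp_all add: Td_e)

lemma Tb_le_Td: "Tb \<beta> w s \<le> Td \<beta> d w s"
  unfolding Td_def by (rule Tb_le)

lemma zz_e: "zz \<beta> n (Suc S) = 1"
  by (induction n) (simp_all add: zz_def z0_def Tb_e)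

lemma tw_nn: "(\<And>s. s \<in> St \<Longrightarrow> 0 \<le> w s) \<Longrightarrow> 0 \<le> tw \<beta> w s a"
  unfolding tw_def by (intro sum_nonneg mult_nonneg_nonneg) auto

lemma Tb_nn: "(\<And>s. s \<in> St \<Longrightarrow> 0 \<le> w s) \<Longrightarrow> 0 \<le> Tb \<beta> w s"
  using Tb_in[of \<beta> w s] tw_nn by metis

lemma zz_nn: "s \<in> St \<Longrightarrow> 0 \<le> zz \<beta> n s"
proof (induction n arbitrary: s)
  case 0 then show ?case by (simp add: zz_def z0_def)
next
  case (Suc n) then show ?case unfolding zz_def funpow.simps comp_def by (intro Tb_nn) (simp add: zz_def)
qed

lemma z0_le1: "s \<in> St \<Longrightarrow> z0 s \<le> 1" by (simp add: z0_def)

lemma zz_le_W: "s \<in> St \<Longrightarrow> zz \<beta> n s \<le> (Tb \<beta> ^^ n) (\<lambda>_. 1) s"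
  unfolding zz_def by (rule Tb_iter_mono[OF z0_le1])

lemma z0_le_Tb: "s \<in> St \<Longrightarrow> z0 s \<le> Tb \<beta> z0 s"
proof -
  assume s: "s \<in> St"
  show ?thesis
  proof (cases "s = Suc S")
    case True then show ?thesis by (simp add: Tb_e)
  next
    case False then show ?thesis using Tb_nn[of z0 \<beta> s] by (simp add: z0_def)
  qed
qed

lemma zz_inc: "s \<in> St \<Longrightarrow> zz \<beta> n s \<le> zz \<beta> (Suc n) s"
proof -
  assume s: "s \<in> St"
  have "zz \<beta> (Suc n) s = (Tb \<beta> ^^ n) (Tb \<beta> z0) s" by (simp add: zz_def funpow_Suc_right del: funpow.simps)
  then show ?thesis unfolding zz_def using Tb_iter_mono[OF z0_le_Tb s] by simp
qed

lemma zz_incseq: "s \<in> St \<Longrightarrow> incseq (\<lambda>n. zz \<beta> n s)"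
  using zz_inc by (simp add: incseq_Suc_iff)

lemma r_le_RR: "s \<in> St \<Longrightarrow> s' \<in> St \<Longrightarrow> r s a s' \<le> RR"
  using RR_ge[of s s' a] by simp

lemma zz_lb:
  assumes b: "0 \<le> \<beta>"
  shows "s \<in> St \<Longrightarrow> exp (- \<beta> * RR * n) * (1 - mm n s) \<le> zz \<beta> n s"
proof (induction n arbitrary: s)
  case 0 then show ?case by (auto simp: zz_def z0_def mm_def indS_def)
next
  case (Suc n)
  have s: "s \<in> St" by fact
  obtain a where a: "zz \<beta> (Suc n) s = tw \<beta> (zz \<beta> n) s a"
    using Tb_in[of \<beta> "zz \<beta> n" s] by (auto simp: zz_def)
  define E where "E = exp (- \<beta> * RR * n)"
  have "exp (- \<beta> * RR * Suc n) * (1 - mm (Suc n) s) \<le> exp (- \<beta> * RR * Suc n) * (1 - (\<Sum>s'\<in>St. pmf (K s a) s' * mm n s'))"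
    by (rule mult_left_mono) (use Uop_ge[of s a "mm n"] mm_Suc in auto)
  also have "\<dots> = (\<Sum>s'\<in>St. pmf (K s a) s' * (exp (- \<beta> * RR) * (E * (1 - mm n s'))))"
  proof -
    have e1: "- \<beta> * RR * real (Suc n) = - \<beta> * RR + (- \<beta> * RR * real n)" by (simp add: algebra_simps)
    have c: "exp (- \<beta> * RR * real (Suc n)) = exp (- \<beta> * RR) * E"
      unfolding E_def e1 by (rule exp_add)
    have eq: "1 - (\<Sum>s'\<in>St. pmf (K s a) s' * mm n s') = (\<Sum>s'\<in>St. pmf (K s a) s' * (1 - mm n s'))"
      using sum_K_1[OF s, of a] by (simp add: algebra_simps sum_subtractf)
    show ?thesis unfolding c eq sum_distrib_left by (rule sum.cong[OF refl]) (simp add: algebra_simps)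
  qed
  also have "\<dots> \<le> (\<Sum>s'\<in>St. pmf (K s a) s' * (exp (- \<beta> * r s a s') * zz \<beta> n s'))"
  proof (rule sum_mono, rule mult_left_mono)
    fix s' assume s': "s' \<in> St"
    show "exp (- \<beta> * RR) * (E * (1 - mm n s')) \<le> exp (- \<beta> * r s a s') * zz \<beta> n s'"
    proof (rule mult_mono)
      show "exp (- \<beta> * RR) \<le> exp (- \<beta> * r s a s')" using r_le_RR[OF s s'] b by (simp add: mult_left_mono)
      show "E * (1 - mm n s') \<le> zz \<beta> n s'" unfolding E_def by (rule Suc.IH[OF s'])
      show "0 \<le> exp (- \<beta> * r s a s')" by simp
      show "0 \<le> E * (1 - mm n s')" unfolding E_def using mm_bounds[OF s'] by simp
    qed
  qed simp
  also have "\<dots> = zz \<beta> (Suc n) s" unfolding a tw_def by (simp add: mult.assoc)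
  finally show ?case .
qed

definition zeta :: "real \<Rightarrow> real" where "zeta \<beta> = exp (- \<beta> * RR * S) * dl"

lemma zeta_pos: "0 < zeta \<beta>" unfolding zeta_def using dl_pos by simp

lemma zz_mono': "s \<in> St \<Longrightarrow> n \<le> m \<Longrightarrow> zz \<beta> n s \<le> zz \<beta> m s"
  using zz_incseq[of s \<beta>] by (simp add: incseq_def)

lemma zz_ge_zeta: "0 \<le> \<beta> \<Longrightarrow> s \<in> St \<Longrightarrow> S \<le> n \<Longrightarrow> zeta \<beta> \<le> zz \<beta> n s"
proof -
  assume b: "0 \<le> \<beta>" and s: "s \<in> St" and n: "S \<le> n"
  have "zeta \<beta> \<le> exp (- \<beta> * RR * S) * (1 - mm S s)"
    unfolding zeta_def by (rule mult_left_mono) (use mm_S_le[OF s] in auto)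
  also have "\<dots> \<le> zz \<beta> S s" by (rule zz_lb[OF b s])
  also have "\<dots> \<le> zz \<beta> n s" by (rule zz_mono'[OF s n])
  finally show ?thesis .
qed

end

context emdp begin

definition Zfin :: "real \<Rightarrow> bool" where "Zfin \<beta> \<longleftrightarrow> (\<exists>B. \<forall>n. mud (zz \<beta> n) \<le> B)"
definition zinf :: "real \<Rightarrow> nat \<Rightarrow> real" where "zinf \<beta> s = lim (\<lambda>n. zz \<beta> n s)"

lemma zz_bdd:
  assumes Z: "Zfin \<beta>" and s: "s \<in> St"
  shows "\<exists>B. \<forall>n. zz \<beta> n s \<le> B"
proof (cases "s = Suc S")
  case True then show ?thesis by (auto simp: zz_e)
next
  case False
  then have sa: "s \<in> Sa" using s by auto
  obtain B where B: "\<And>n. mud (zz \<beta> n) \<le> B" using Z unfolding Zfin_def by blast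
  have "zz \<beta> n s \<le> B / pmf \<mu> s" for n
  proof -
    have "pmf \<mu> s * zz \<beta> n s \<le> mud (zz \<beta> n)"
      unfolding mud_def by (rule member_le_sum[OF sa]) (simp_all add: zz_nn)
    then have "pmf \<mu> s * zz \<beta> n s \<le> B" using B[of n] by linarith
    then show ?thesis using mud_pos[OF sa] by (simp add: field_simps)
  qed
  then show ?thesis by blast
qed

lemma zz_tendsto:
  assumes Z: "Zfin \<beta>" and s: "s \<in> St"
  shows "(\<lambda>n. zz \<beta> n s) \<longlonglongrightarrow> zinf \<beta> s"
proof -
  obtain B where "\<forall>n. zz \<beta> n s \<le> B" using zz_bdd[OF Z s] by blast
  then obtain L where "(\<lambda>n. zz \<beta> n s) \<longlonglongrightarrow> L" using incseq_convergent[OF zz_incseq[OF s]] by blast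
  then show ?thesis unfolding zinf_def by (simp add: limI)
qed

lemma zz_le_zinf: "Zfin \<beta> \<Longrightarrow> s \<in> St \<Longrightarrow> zz \<beta> n s \<le> zinf \<beta> s"
  using incseq_le[OF zz_incseq zz_tendsto] by blast

lemma zinf_nn: "Zfin \<beta> \<Longrightarrow> s \<in> St \<Longrightarrow> 0 \<le> zinf \<beta> s"
  using zz_le_zinf zz_nn order_trans by blast

lemma zinf_e: "zinf \<beta> (Suc S) = 1"
  unfolding zinf_def zz_e by simp

lemma zinf_ge_zeta: "0 \<le> \<beta> \<Longrightarrow> Zfin \<beta> \<Longrightarrow> s \<in> St \<Longrightarrow> zeta \<beta> \<le> zinf \<beta> s"
  using zz_ge_zeta[of \<beta> s S] zz_le_zinf[of \<beta> s S] by simp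

lemma Tb_zinf:
  assumes b: "0 \<le> \<beta>" and Z: "Zfin \<beta>" and s: "s \<in> St"
  shows "Tb \<beta> (zinf \<beta>) s \<le> zinf \<beta> s"
proof -
  define eps where "eps n = exp (\<beta> * RR) * (\<Sum>s'\<in>St. zinf \<beta> s' - zz \<beta> n s')" for n
  have "(\<lambda>n. zinf \<beta> s + eps n) \<longlonglongrightarrow> zinf \<beta> s + exp (\<beta> * RR) * (\<Sum>s'\<in>St. zinf \<beta> s' - zinf \<beta> s')"
    unfolding eps_def
    by (intro tendsto_add tendsto_const tendsto_mult_left tendsto_sum tendsto_diff zz_tendsto[OF Z]) auto
  then have lim: "(\<lambda>n. zinf \<beta> s + eps n) \<longlonglongrightarrow> zinf \<beta> s" by simp
  have "Tb \<beta> (zinf \<beta>) s \<le> zinf \<beta> s + eps n" for n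
  proof -
    obtain a where a: "Tb \<beta> (zz \<beta> n) s = tw \<beta> (zz \<beta> n) s a" using Tb_in by blast
    have "tw \<beta> (zinf \<beta>) s a = tw \<beta> (zz \<beta> n) s a + (\<Sum>s'\<in>St. pmf (K s a) s' * exp (- \<beta> * r s a s') * (zinf \<beta> s' - zz \<beta> n s'))"
      unfolding tw_def by (simp add: algebra_simps sum.distrib[symmetric])
    also have "\<dots> \<le> zinf \<beta> s + eps n"
    proof (rule add_mono)
      have "tw \<beta> (zz \<beta> n) s a = zz \<beta> (Suc n) s" using a by (simp add: zz_def)
      then show "tw \<beta> (zz \<beta> n) s a \<le> zinf \<beta> s" using zz_le_zinf[OF Z s] by simp
      show "(\<Sum>s'\<in>St. pmf (K s a) s' * exp (- \<beta> * r s a s') * (zinf \<beta> s' - zz \<beta> n s')) \<le> eps n"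
        unfolding eps_def sum_distrib_left
      proof (rule sum_mono)
        fix s' assume s': "s' \<in> St"
        have d: "0 \<le> zinf \<beta> s' - zz \<beta> n s'" using zz_le_zinf[OF Z s'] by simp
        have "pmf (K s a) s' * exp (- \<beta> * r s a s') \<le> 1 * exp (\<beta> * RR)"
        proof (rule mult_mono)
          show "pmf (K s a) s' \<le> 1" by (rule pmf_le_1)
          have "- r s a s' \<le> RR" using RR_ge[OF s s', of a] by simp
          then show "exp (- \<beta> * r s a s') \<le> exp (\<beta> * RR)" using b mult_left_mono[of "- r s a s'" RR \<beta>] by simp
        qed simp_all
        then show "pmf (K s a) s' * exp (- \<beta> * r s a s') * (zinf \<beta> s' - zz \<beta> n s') \<le> exp (\<beta> * RR) * (zinf \<beta> s' - zz \<beta> n s')"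
          using mult_right_mono[OF _ d] by simp
      qed
    qed
    finally show ?thesis using Tb_le[of \<beta> "zinf \<beta>" s a] by linarith
  qed
  then show ?thesis by (intro LIMSEQ_le_const[OF lim]) auto
qed

definition dgr :: "real \<Rightarrow> nat \<Rightarrow> 'a" where
  "dgr \<beta> s = (if s \<in> St then (SOME a. tw \<beta> (zinf \<beta>) s a = Tb \<beta> (zinf \<beta>) s) else undefined)"

lemma dgr_PiE: "dgr \<beta> \<in> PiE St (\<lambda>_. UNIV)"
  by (auto simp: PiE_iff extensional_def dgr_def)

lemma dgr_Td: "s \<in> St \<Longrightarrow> Td \<beta> (dgr \<beta>) (zinf \<beta>) s = Tb \<beta> (zinf \<beta>) s"
proof -
  assume s: "s \<in> St"
  have "\<exists>a. tw \<beta> (zinf \<beta>) s a = Tb \<beta> (zinf \<beta>) s" using Tb_in by metis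
  then have "tw \<beta> (zinf \<beta>) s (SOME a. tw \<beta> (zinf \<beta>) s a = Tb \<beta> (zinf \<beta>) s) = Tb \<beta> (zinf \<beta>) s"
    by (rule someI_ex)
  then show ?thesis using s by (simp add: Td_def dgr_def)
qed

end

context emdp begin

definition qq :: "real \<Rightarrow> nat \<Rightarrow> nat \<Rightarrow> real" where "qq \<beta> n = (Td \<beta> (dgr \<beta>) ^^ n) z0"

context
  fixes \<beta> :: real
  assumes b: "0 \<le> \<beta>" and Z: "Zfin \<beta>"
begin

lemma mud_scale: "mud (\<lambda>s. c * f s) = c * mud f"
  unfolding mud_def by (simp add: sum_distrib_left algebra_simps)

lemma Td_zinf_iter: "s \<in> St \<Longrightarrow> (Td \<beta> (dgr \<beta>) ^^ n) (zinf \<beta>) s \<le> zinf \<beta> s"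
proof (induction n arbitrary: s)
  case 0 then show ?case by simp
next
  case (Suc n)
  have "(Td \<beta> (dgr \<beta>) ^^ Suc n) (zinf \<beta>) s = Td \<beta> (dgr \<beta>) ((Td \<beta> (dgr \<beta>) ^^ n) (zinf \<beta>)) s" by simp
  also have "\<dots> \<le> Td \<beta> (dgr \<beta>) (zinf \<beta>) s" by (rule Td_mono) (rule Suc.IH)
  also have "\<dots> \<le> zinf \<beta> s" using dgr_Td[OF Suc.prems] Tb_zinf[OF b Z Suc.prems] by simp
  finally show ?case .
qed

lemma z0_le_zinf: "s \<in> St \<Longrightarrow> z0 s \<le> zinf \<beta> s"
  using zinf_nn[OF Z] by (auto simp: z0_def zinf_e)

lemma qq_le: "s \<in> St \<Longrightarrow> qq \<beta> n s \<le> zinf \<beta> s"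
proof -
  assume s: "s \<in> St"
  have "qq \<beta> n s \<le> (Td \<beta> (dgr \<beta>) ^^ n) (zinf \<beta>) s" unfolding qq_def by (rule Td_iter_mono[OF z0_le_zinf s])
  also have "\<dots> \<le> zinf \<beta> s" by (rule Td_zinf_iter[OF s])
  finally show ?thesis .
qed

lemma qq_ge: "s \<in> St \<Longrightarrow> zz \<beta> n s \<le> qq \<beta> n s"
proof (induction n arbitrary: s)
  case 0 then show ?case by (simp add: zz_def qq_def)
next
  case (Suc n)
  have "zz \<beta> (Suc n) s = Tb \<beta> (zz \<beta> n) s" by (simp add: zz_def)
  also have "\<dots> \<le> Tb \<beta> (qq \<beta> n) s" by (rule Tb_mono) (rule Suc.IH)
  also have "\<dots> \<le> Td \<beta> (dgr \<beta>) (qq \<beta> n) s" by (rule Tb_le_Td)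
  also have "\<dots> = qq \<beta> (Suc n) s" by (simp add: qq_def)
  finally show ?case .
qed

lemma qq_inc: "s \<in> St \<Longrightarrow> qq \<beta> n s \<le> qq \<beta> (Suc n) s"
proof -
  assume s: "s \<in> St"
  have 1: "z0 s' \<le> Td \<beta> (dgr \<beta>) z0 s'" if "s' \<in> St" for s'
    using z0_le_Tb[OF that, of \<beta>] Tb_le_Td[of \<beta> z0 s' "dgr \<beta>"] by simp
  have "qq \<beta> (Suc n) s = (Td \<beta> (dgr \<beta>) ^^ n) (Td \<beta> (dgr \<beta>) z0) s"
    by (simp add: qq_def funpow_Suc_right del: funpow.simps)
  then show ?thesis unfolding qq_def using Td_iter_mono[OF 1 s] by simp
qed

lemma qq_conv: "s \<in> St \<Longrightarrow> \<exists>L. (\<lambda>n. qq \<beta> n s) \<longlonglongrightarrow> L"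
proof -
  assume s: "s \<in> St"
  have "incseq (\<lambda>n. qq \<beta> n s)" using qq_inc[OF s] by (simp add: incseq_Suc_iff)
  then show ?thesis using incseq_convergent[of "\<lambda>n. qq \<beta> n s" "zinf \<beta> s"] qq_le[OF s] by blast
qed

lemma qq_e: "qq \<beta> n (Suc S) = 1"
  unfolding qq_def Td_iter_e by (simp add: z0_def)

lemma indS_bound: "s \<in> St \<Longrightarrow> indS s \<le> (1 / zeta \<beta>) * (qq \<beta> S s - z0 s)"
proof -
  assume s: "s \<in> St"
  show ?thesis
  proof (cases "s = Suc S")
    case True then show ?thesis by (simp add: indS_def qq_e z0_def)
  next
    case False then have sa: "s \<in> Sa" using s by auto
    have "zeta \<beta> \<le> qq \<beta> S s" using zz_ge_zeta[OF b s, of S] qq_ge[OF s, of S] by simp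
    then have "1 \<le> (1 / zeta \<beta>) * qq \<beta> S s" using zeta_pos[of \<beta>] by (simp add: field_simps)
    then show ?thesis using sa False by (simp add: indS_def z0_def)
  qed
qed

lemma TdindS: "s \<in> St \<Longrightarrow> (Td \<beta> (dgr \<beta>) ^^ n) indS s \<le> (1 / zeta \<beta>) * (qq \<beta> (n + S) s - qq \<beta> n s)"
proof -
  assume s: "s \<in> St"
  have "(Td \<beta> (dgr \<beta>) ^^ n) indS s \<le> (Td \<beta> (dgr \<beta>) ^^ n) (\<lambda>s. (1 / zeta \<beta>) * (qq \<beta> S s - z0 s)) s"
    by (rule Td_iter_mono[OF indS_bound s])
  also have "\<dots> = (1 / zeta \<beta>) * ((Td \<beta> (dgr \<beta>) ^^ n) (qq \<beta> S) s - (Td \<beta> (dgr \<beta>) ^^ n) z0 s)"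
    by (simp only: Td_iter_scale Td_iter_diff)
  also have "\<dots> = (1 / zeta \<beta>) * (qq \<beta> (n + S) s - qq \<beta> n s)"
    by (simp add: qq_def funpow_add)
  finally show ?thesis .
qed

lemma Td1: "s \<in> St \<Longrightarrow> (Td \<beta> (dgr \<beta>) ^^ n) (\<lambda>_. 1) s \<le> zinf \<beta> s + (Td \<beta> (dgr \<beta>) ^^ n) indS s"
proof -
  assume s: "s \<in> St"
  have 1: "1 \<le> zinf \<beta> s' + indS s'" if "s' \<in> St" for s'
  proof (cases "s' = Suc S")
    case True then show ?thesis by (simp add: zinf_e indS_def)
  next
    case False then show ?thesis using that zinf_nn[OF Z that] by (simp add: indS_def)
  qed
  have "(Td \<beta> (dgr \<beta>) ^^ n) (\<lambda>_. 1) s \<le> (Td \<beta> (dgr \<beta>) ^^ n) (\<lambda>s. zinf \<beta> s + indS s) s"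
    by (rule Td_iter_mono[OF 1 s])
  also have "\<dots> = (Td \<beta> (dgr \<beta>) ^^ n) (zinf \<beta>) s + (Td \<beta> (dgr \<beta>) ^^ n) indS s"
    by (simp add: Td_iter_add)
  also have "\<dots> \<le> zinf \<beta> s + (Td \<beta> (dgr \<beta>) ^^ n) indS s"
    using Td_zinf_iter[OF s] by simp
  finally show ?thesis .
qed

lemma good_d_aux:
  "\<exists>eps. eps \<longlonglongrightarrow> 0 \<and> (\<forall>t. Phi (sd_policy (dgr \<beta>)) t \<beta> \<le> mud (zinf \<beta>) + eps t)"
proof -
  define eps where "eps t = (1 / zeta \<beta>) * mud (\<lambda>s. qq \<beta> (Suc t + S) s - qq \<beta> (Suc t) s)" for t
  have per: "(\<lambda>t. pmf \<mu> s * (qq \<beta> (Suc t + S) s - qq \<beta> (Suc t) s)) \<longlonglongrightarrow> pmf \<mu> s * 0"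
    if "s \<in> Sa" for s
  proof -
    have s: "s \<in> St" using that by auto
    obtain L where L: "(\<lambda>n. qq \<beta> n s) \<longlonglongrightarrow> L" using qq_conv[OF s] by blast
    have 1: "(\<lambda>t. qq \<beta> (Suc t + S) s) \<longlonglongrightarrow> L"
      using LIMSEQ_ignore_initial_segment[OF L, of "Suc S"] by (simp add: add.commute)
    have 2: "(\<lambda>t. qq \<beta> (Suc t) s) \<longlonglongrightarrow> L" using LIMSEQ_Suc[OF L] .
    show ?thesis using tendsto_mult_left[OF tendsto_diff[OF 1 2], of "pmf \<mu> s"] by simp
  qed
  have "eps \<longlonglongrightarrow> (1 / zeta \<beta>) * (\<Sum>s\<in>Sa. pmf \<mu> s * 0)"
    unfolding eps_def mud_def by (intro tendsto_mult_left tendsto_sum per)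
  then have lim: "eps \<longlonglongrightarrow> 0" by simp
  have "Phi (sd_policy (dgr \<beta>)) t \<beta> \<le> mud (zinf \<beta>) + eps t" for t
  proof -
    have "Phi (sd_policy (dgr \<beta>)) t \<beta> = mud ((Td \<beta> (dgr \<beta>) ^^ Suc t) (\<lambda>_. 1))" by (rule Phi_sd)
    also have "\<dots> \<le> mud (\<lambda>s. zinf \<beta> s + (1 / zeta \<beta>) * (qq \<beta> (Suc t + S) s - qq \<beta> (Suc t) s))"
    proof (rule mud_mono)
      fix s assume "s \<in> Sa" then have s: "s \<in> St" by auto
      show "(Td \<beta> (dgr \<beta>) ^^ Suc t) (\<lambda>_. 1) s \<le> zinf \<beta> s + (1 / zeta \<beta>) * (qq \<beta> (Suc t + S) s - qq \<beta> (Suc t) s)"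
        using Td1[OF s, of "Suc t"] TdindS[OF s, of "Suc t"] by linarith
    qed
    also have "\<dots> = mud (zinf \<beta>) + eps t"
      unfolding eps_def by (simp only: mud_add mud_scale)
    finally show ?thesis .
  qed
  then show ?thesis using lim by blast
qed

end

lemma Zval_pos: "0 \<le> \<beta> \<Longrightarrow> Zfin \<beta> \<Longrightarrow> zeta \<beta> \<le> mud (zinf \<beta>)"
  using mud_mono[of "\<lambda>_. zeta \<beta>" "zinf \<beta>"] zinf_ge_zeta by (auto simp: mud_const)

lemma mud_zz_tendsto: "Zfin \<beta> \<Longrightarrow> (\<lambda>n. mud (zz \<beta> n)) \<longlonglongrightarrow> mud (zinf \<beta>)"
  unfolding mud_def by (intro tendsto_sum tendsto_mult_left zz_tendsto) auto

lemma mud_zz_inc: "m \<le> n \<Longrightarrow> mud (zz \<beta> m) \<le> mud (zz \<beta> n)"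
  by (rule mud_mono) (auto intro: zz_mono')

end

context emdp begin

definition tm :: "'a policy \<Rightarrow> nat \<Rightarrow> real \<Rightarrow> real" where
  "tm \<pi> t \<beta> = - ln (Phi \<pi> t \<beta>) / \<beta> + ln \<alpha> / \<beta>"

definition EV :: "'a policy \<Rightarrow> nat \<Rightarrow> real" where
  "EV \<pi> t = EVaR \<alpha> (return_dist K r \<pi> \<mu> t)"

lemma EV_eq: "EV \<pi> t = (SUP \<beta>\<in>{0<..}. tm \<pi> t \<beta>)"
  unfolding EV_def EVaR_def tm_def Phi_def ..

lemma Phi_pos: "0 \<le> \<beta> \<Longrightarrow> 0 < Phi \<pi> t \<beta>"
  using Phi_lb[of \<beta> \<pi> t] by (meson exp_gt_zero less_le_trans)

lemma ln_alpha: "ln \<alpha> < 0" using alpha0 alpha1 by simp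

lemma tm_le: "0 < \<beta> \<Longrightarrow> tm \<pi> t \<beta> \<le> Vmax + ln \<alpha> / \<beta>"
proof -
  assume b: "0 < \<beta>"
  have "- \<beta> * Vmax \<le> ln (Phi \<pi> t \<beta>)"
    using Phi_lb[of \<beta> \<pi> t] b Phi_pos[of \<beta> \<pi> t] by (subst ln_exp[symmetric]) (simp only: ln_le_cancel_iff exp_gt_zero)
  then have "- ln (Phi \<pi> t \<beta>) / \<beta> \<le> Vmax" using b by (simp add: field_simps)
  then show ?thesis unfolding tm_def by simp
qed

lemma tm_le_V: "0 < \<beta> \<Longrightarrow> tm \<pi> t \<beta> \<le> Vmax"
  using tm_le[of \<beta> \<pi> t] ln_alpha by (smt (verit) divide_neg_pos)

lemma tm_bdd: "bdd_above (tm \<pi> t ` {0<..})"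
  using tm_le_V by (auto intro!: bdd_aboveI2)

lemma EV_ge: "0 < \<beta> \<Longrightarrow> tm \<pi> t \<beta> \<le> EV \<pi> t"
  unfolding EV_eq by (rule cSUP_upper[OF _ tm_bdd]) simp

lemma EV_le: "(\<And>\<beta>. 0 < \<beta> \<Longrightarrow> tm \<pi> t \<beta> \<le> c) \<Longrightarrow> EV \<pi> t \<le> c"
  unfolding EV_eq by (rule cSUP_least) auto

lemma exp_convex_ineq: "0 \<le> (\<theta>::real) \<Longrightarrow> \<theta> \<le> 1 \<Longrightarrow> exp (\<theta> * w) \<le> (1 - \<theta>) + \<theta> * exp w"
  using convex_onD[OF exp_convex, of \<theta> 0 w] by simp

lemma Phi_mono:
  assumes b: "0 < \<beta>" "\<beta> \<le> \<beta>'"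
  shows "- ln (Phi \<pi> t \<beta>') / \<beta>' \<le> - ln (Phi \<pi> t \<beta>) / \<beta>"
proof -
  define D where "D = return_dist K r \<pi> \<mu> t"
  define m where "m = Phi \<pi> t \<beta>'"
  define \<theta> where "\<theta> = \<beta> / \<beta>'"
  define c where "c = ln m"
  have b': "0 < \<beta>'" using b by simp
  have m: "0 < m" unfolding m_def using Phi_pos b' by simp
  have th: "0 < \<theta>" "\<theta> \<le> 1" unfolding \<theta>_def using b by auto
  have finD: "finite (set_pmf D)" unfolding D_def by (rule fin_rd)
  have sum1: "(\<Sum>x\<in>set_pmf D. pmf D x) = 1" by (rule sum_pmf_eq_1[OF finD order.refl])
  have pt: "exp (- \<beta> * x) \<le> exp (\<theta> * c) * ((1 - \<theta>) + \<theta> * (exp (- \<beta>' * x) / m))" for x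
  proof -
    have e: "- \<beta> * x = \<theta> * c + \<theta> * (- \<beta>' * x - c)"
      unfolding \<theta>_def using b' by (simp add: field_simps)
    have "exp (- \<beta> * x) = exp (\<theta> * c) * exp (\<theta> * (- \<beta>' * x - c))"
      unfolding e by (rule exp_add)
    also have "\<dots> \<le> exp (\<theta> * c) * ((1 - \<theta>) + \<theta> * exp (- \<beta>' * x - c))"
      by (rule mult_left_mono[OF exp_convex_ineq]) (use th in auto)
    also have "exp (- \<beta>' * x - c) = exp (- \<beta>' * x) / m" unfolding c_def using m by (simp add: exp_diff)
    finally show ?thesis .
  qed
  have "Phi \<pi> t \<beta> = (\<Sum>x\<in>set_pmf D. pmf D x * exp (- \<beta> * x))"
    unfolding Phi_def D_def[symmetric] by (rule exp_finite_sum[OF finD order.refl])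
  also have "\<dots> \<le> (\<Sum>x\<in>set_pmf D. pmf D x * (exp (\<theta> * c) * ((1 - \<theta>) + \<theta> * (exp (- \<beta>' * x) / m))))"
    by (intro sum_mono mult_left_mono pt) auto
  also have "\<dots> = exp (\<theta> * c) * ((1 - \<theta>) * (\<Sum>x\<in>set_pmf D. pmf D x) + (\<theta> / m) * (\<Sum>x\<in>set_pmf D. pmf D x * exp (- \<beta>' * x)))"
  proof -
    have "(\<Sum>x\<in>set_pmf D. pmf D x * (exp (\<theta> * c) * ((1 - \<theta>) + \<theta> * (exp (- \<beta>' * x) / m))))
      = (\<Sum>x\<in>set_pmf D. exp (\<theta> * c) * (1 - \<theta>) * pmf D x + exp (\<theta> * c) * (\<theta> / m) * (pmf D x * exp (- \<beta>' * x)))"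
      by (rule sum.cong[OF refl]) (simp add: algebra_simps)
    also have "\<dots> = exp (\<theta> * c) * (1 - \<theta>) * (\<Sum>x\<in>set_pmf D. pmf D x) + exp (\<theta> * c) * (\<theta> / m) * (\<Sum>x\<in>set_pmf D. pmf D x * exp (- \<beta>' * x))"
      by (simp only: sum.distrib sum_distrib_left)
    finally show ?thesis by (simp add: algebra_simps)
  qed
  also have "(\<Sum>x\<in>set_pmf D. pmf D x * exp (- \<beta>' * x)) = m"
    unfolding m_def Phi_def D_def[symmetric] by (rule exp_finite_sum[OF finD order.refl, symmetric])
  finally have "Phi \<pi> t \<beta> \<le> exp (\<theta> * c)" using m sum1 by simp
  then have "ln (Phi \<pi> t \<beta>) \<le> \<theta> * c" using Phi_pos[of \<beta> \<pi> t] b by (subst ln_exp[symmetric]) (simp only: ln_le_cancel_iff exp_gt_zero)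
  then have "ln (Phi \<pi> t \<beta>) / \<beta> \<le> c / \<beta>'" unfolding \<theta>_def using b b' by (simp add: field_simps)
  then show ?thesis unfolding c_def m_def by simp
qed

end

context emdp begin

definition psi :: "real \<Rightarrow> real \<Rightarrow> real" where "psi \<beta> y = - ln y / \<beta> + ln \<alpha> / \<beta>"

lemma psi_tendsto:
  assumes "f \<longlonglongrightarrow> y" "0 < y"
  shows "(\<lambda>t. psi \<beta> (f t)) \<longlonglongrightarrow> psi \<beta> y"
proof -
  have L: "(\<lambda>t. ln (f t)) \<longlonglongrightarrow> ln y" by (rule tendsto_ln[OF assms(1)]) (use assms(2) in simp)
  show ?thesis unfolding psi_def divide_inverse by (intro tendsto_add tendsto_mult_right tendsto_minus tendsto_const L)
qed

lemma evt:
  assumes b: "0 < \<beta>" and h: "Zfin \<beta> \<Longrightarrow> psi \<beta> (mud (zinf \<beta>)) < c"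
  shows "eventually (\<lambda>t. 0 < mud (zz \<beta> (Suc t)) \<and> psi \<beta> (mud (zz \<beta> (Suc t))) < c) sequentially"
proof (cases "Zfin \<beta>")
  case True
  have Zpos: "0 < mud (zinf \<beta>)" using Zval_pos[OF less_imp_le[OF b] True] zeta_pos[of \<beta>] by linarith
  have lim: "(\<lambda>t. mud (zz \<beta> (Suc t))) \<longlonglongrightarrow> mud (zinf \<beta>)" using LIMSEQ_Suc[OF mud_zz_tendsto[OF True]] .
  have lim2: "(\<lambda>t. psi \<beta> (mud (zz \<beta> (Suc t)))) \<longlonglongrightarrow> psi \<beta> (mud (zinf \<beta>))" by (rule psi_tendsto[OF lim Zpos])
  show ?thesis
    using order_tendstoD(1)[OF lim Zpos] order_tendstoD(2)[OF lim2 h[OF True]] by (rule eventually_conj)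
next
  case False
  define B where "B = exp (ln \<alpha> - c * \<beta>)"
  have Bpos: "0 < B" unfolding B_def by simp
  obtain n where n: "B < mud (zz \<beta> n)" using False unfolding Zfin_def by (meson not_le)
  show ?thesis
  proof (rule eventually_sequentiallyI[of n])
    fix t assume "n \<le> t"
    then have "mud (zz \<beta> n) \<le> mud (zz \<beta> (Suc t))" by (intro mud_zz_inc) simp
    then have y: "B < mud (zz \<beta> (Suc t))" using n by linarith
    then have ypos: "0 < mud (zz \<beta> (Suc t))" using Bpos by linarith
    have "ln B < ln (mud (zz \<beta> (Suc t)))" using y Bpos ypos by simp
    then have "ln \<alpha> - c * \<beta> < ln (mud (zz \<beta> (Suc t)))" unfolding B_def by simp
    then have "- ln (mud (zz \<beta> (Suc t))) + ln \<alpha> < c * \<beta>" by simp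
    then have "(- ln (mud (zz \<beta> (Suc t))) + ln \<alpha>) / \<beta> < c" using b by (simp add: field_simps)
    then show "0 < mud (zz \<beta> (Suc t)) \<and> psi \<beta> (mud (zz \<beta> (Suc t))) < c"
      using ypos unfolding psi_def by (simp add: diff_divide_distrib)
  qed
qed

lemma key:
  assumes hc: "\<And>\<beta>. 0 < \<beta> \<Longrightarrow> Zfin \<beta> \<Longrightarrow> psi \<beta> (mud (zinf \<beta>)) < c" and k: "0 < \<kappa>"
  shows "eventually (\<lambda>t. EV \<pi> t \<le> c + \<kappa>) sequentially"
proof -
  define \<eta> where "\<eta> = \<kappa> / (- ln \<alpha>)"
  have eta: "0 < \<eta>" unfolding \<eta>_def by (intro divide_pos_pos) (use k ln_alpha in auto)
  have leta: "ln \<alpha> * \<eta> = - \<kappa>" unfolding \<eta>_def using ln_alpha by simp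
  define N :: nat where "N = nat \<lceil>(Vmax - c) / \<kappa>\<rceil>"
  have "(Vmax - c) / \<kappa> \<le> real N" unfolding N_def by (rule real_nat_ceiling_ge)
  then have NV: "Vmax - \<kappa> * real N \<le> c" using k by (simp add: field_simps)
  define bb where "bb i = 1 / (real i * \<eta>)" for i :: nat
  have bbpos: "0 < bb i" if "i \<in> {1..N}" for i using that eta unfolding bb_def by simp
  have ev: "eventually (\<lambda>t. \<forall>i\<in>{1..N}. 0 < mud (zz (bb i) (Suc t)) \<and> psi (bb i) (mud (zz (bb i) (Suc t))) < c) sequentially"
    by (rule eventually_ball_finite) (auto intro!: evt hc bbpos)
  then show ?thesis
  proof (rule eventually_mono)
    fix t assume H: "\<forall>i\<in>{1..N}. 0 < mud (zz (bb i) (Suc t)) \<and> psi (bb i) (mud (zz (bb i) (Suc t))) < c"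
    show "EV \<pi> t \<le> c + \<kappa>"
    proof (rule EV_le)
      fix \<beta> :: real assume b: "0 < \<beta>"
      show "tm \<pi> t \<beta> \<le> c + \<kappa>"
      proof (cases "real N * \<eta> \<le> 1 / \<beta>")
        case True
        have "ln \<alpha> / \<beta> = ln \<alpha> * (1 / \<beta>)" by simp
        also have "\<dots> \<le> ln \<alpha> * (real N * \<eta>)" by (rule mult_left_mono_neg[OF True]) (use ln_alpha in simp)
        also have "\<dots> = (ln \<alpha> * \<eta>) * real N" by (simp add: algebra_simps)
        also have "\<dots> = - \<kappa> * real N" using leta by simp
        finally have "ln \<alpha> / \<beta> \<le> - \<kappa> * real N" .
        then show ?thesis using tm_le[OF b, of \<pi> t] NV k by linarith
      next
        case False
        define x where "x = 1 / (\<beta> * \<eta>)"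
        have x0: "0 \<le> x" unfolding x_def using b eta by simp
        have xN: "x < real N" using False unfolding x_def using b eta by (simp add: field_simps)
        define i where "i = nat \<lfloor>x\<rfloor> + 1"
        have fl: "real (nat \<lfloor>x\<rfloor>) = of_int \<lfloor>x\<rfloor>" using x0 by simp
        have i1: "real i - 1 \<le> x" unfolding i_def using fl by simp
        have i2: "x < real i" unfolding i_def using fl by linarith
        have "\<lfloor>x\<rfloor> < int N" using xN by (simp add: floor_less_iff)
        then have "nat \<lfloor>x\<rfloor> < N" using x0 by (subst nat_less_iff) simp_all
        then have iN: "i \<in> {1..N}" unfolding i_def by auto
        have bbi: "0 < bb i" by (rule bbpos[OF iN])
        have bbb: "bb i \<le> \<beta>"
        proof -
          have ipos: "0 < real i" using iN by auto
          have "1 / (\<beta> * \<eta>) < real i" using i2 unfolding x_def .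
          then have "1 < real i * (\<beta> * \<eta>)" using b eta by (simp add: divide_less_eq)
          then have "1 \<le> \<beta> * (real i * \<eta>)" by (simp add: algebra_simps)
          then show ?thesis unfolding bb_def using ipos eta by (simp add: divide_le_eq)
        qed
        have Hi: "0 < mud (zz (bb i) (Suc t))" "psi (bb i) (mud (zz (bb i) (Suc t))) < c" using H iN by auto
        have "mud (zz (bb i) (Suc t)) \<le> Phi \<pi> t (bb i)"
        proof -
          have "mud (zz (bb i) (Suc t)) \<le> mud ((Tb (bb i) ^^ Suc t) (\<lambda>_. 1))"
            by (rule mud_mono) (rule zz_le_W, auto)
          also have "\<dots> \<le> Phi \<pi> t (bb i)" by (rule Phi_ge)
          finally show ?thesis .
        qed
        then have "ln (mud (zz (bb i) (Suc t))) \<le> ln (Phi \<pi> t (bb i))" using Hi(1) by simp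
        then have A: "- ln (Phi \<pi> t (bb i)) / bb i \<le> - ln (mud (zz (bb i) (Suc t))) / bb i"
          using bbi by (simp add: divide_right_mono)
        have B: "- ln (Phi \<pi> t \<beta>) / \<beta> \<le> - ln (Phi \<pi> t (bb i)) / bb i" by (rule Phi_mono[OF bbi bbb])
        have "ln \<alpha> / \<beta> = ln \<alpha> * (x * \<eta>)" unfolding x_def using eta by simp
        also have "\<dots> \<le> ln \<alpha> * ((real i - 1) * \<eta>)"
          by (rule mult_left_mono_neg) (use i1 eta ln_alpha in \<open>simp_all add: mult_right_mono\<close>)
        also have "\<dots> = ln \<alpha> / bb i + \<kappa>" unfolding bb_def using leta by (simp add: algebra_simps)
        finally have C: "ln \<alpha> / \<beta> \<le> ln \<alpha> / bb i + \<kappa>" .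
        have "tm \<pi> t \<beta> \<le> psi (bb i) (mud (zz (bb i) (Suc t))) + \<kappa>"
          unfolding tm_def psi_def using A B C by linarith
        then show ?thesis using Hi(2) by linarith
      qed
    qed
  qed
qed

lemma liminf_upper:
  assumes L: "\<And>\<beta>. 0 < \<beta> \<Longrightarrow> Zfin \<beta> \<Longrightarrow> ereal (psi \<beta> (mud (zinf \<beta>))) \<le> L"
  shows "liminf (\<lambda>t. ereal (EV \<pi> t)) \<le> L"
proof (rule ereal_le_real)
  fix z assume Lz: "L \<le> ereal z"
  show "liminf (\<lambda>t. ereal (EV \<pi> t)) \<le> ereal z"
  proof (rule ereal_le_epsilon2)
    fix e :: real assume e: "0 < e"
    have hc: "psi \<beta> (mud (zinf \<beta>)) < z + e / 2" if "0 < \<beta>" "Zfin \<beta>" for \<beta>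
    proof -
      have "ereal (psi \<beta> (mud (zinf \<beta>))) \<le> ereal z" using L[OF that] Lz by (rule order_trans)
      then show ?thesis using e by simp
    qed
    have "eventually (\<lambda>t. EV \<pi> t \<le> (z + e / 2) + e / 2) sequentially"
      by (rule key[OF hc]) (use e in simp_all)
    then have "Limsup sequentially (\<lambda>t. ereal (EV \<pi> t)) \<le> ereal (z + e)"
      by (intro Limsup_bounded) (auto elim: eventually_mono)
    moreover have "liminf (\<lambda>t. ereal (EV \<pi> t)) \<le> Limsup sequentially (\<lambda>t. ereal (EV \<pi> t))"
      by (rule Liminf_le_Limsup) simp
    ultimately show "liminf (\<lambda>t. ereal (EV \<pi> t)) \<le> ereal z + ereal e" by simp
  qed
qed

lemma Lf_ge:
  assumes b: "0 < \<beta>" and Z: "Zfin \<beta>"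
  shows "ereal (psi \<beta> (mud (zinf \<beta>))) \<le> liminf (\<lambda>t. ereal (EV (sd_policy (dgr \<beta>)) t))"
proof -
  obtain eps where eps: "eps \<longlonglongrightarrow> 0" "\<And>t. Phi (sd_policy (dgr \<beta>)) t \<beta> \<le> mud (zinf \<beta>) + eps t"
    using good_d_aux[OF less_imp_le[OF b] Z] by blast
  have Zpos: "0 < mud (zinf \<beta>)" using Zval_pos[OF less_imp_le[OF b] Z] zeta_pos[of \<beta>] by linarith
  have lim: "(\<lambda>t. mud (zinf \<beta>) + eps t) \<longlonglongrightarrow> mud (zinf \<beta>)"
    using tendsto_add[OF tendsto_const eps(1), of "mud (zinf \<beta>)"] by simp
  have tl: "(\<lambda>t. ereal (psi \<beta> (mud (zinf \<beta>) + eps t))) \<longlonglongrightarrow> ereal (psi \<beta> (mud (zinf \<beta>)))"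
  proof -
    have "(\<lambda>t. psi \<beta> (mud (zinf \<beta>) + eps t)) \<longlonglongrightarrow> psi \<beta> (mud (zinf \<beta>))" by (rule psi_tendsto[OF lim Zpos])
    then show ?thesis by (rule tendsto_ereal)
  qed
  have le: "psi \<beta> (mud (zinf \<beta>) + eps t) \<le> EV (sd_policy (dgr \<beta>)) t" for t
  proof -
    have P: "0 < Phi (sd_policy (dgr \<beta>)) t \<beta>" using Phi_pos b by simp
    have "ln (Phi (sd_policy (dgr \<beta>)) t \<beta>) \<le> ln (mud (zinf \<beta>) + eps t)"
      using eps(2)[of t] P by simp
    then have "psi \<beta> (mud (zinf \<beta>) + eps t) \<le> tm (sd_policy (dgr \<beta>)) t \<beta>"
      unfolding psi_def tm_def using b by (simp add: divide_right_mono)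
    also have "\<dots> \<le> EV (sd_policy (dgr \<beta>)) t" by (rule EV_ge[OF b])
    finally show ?thesis .
  qed
  have "ereal (psi \<beta> (mud (zinf \<beta>))) = liminf (\<lambda>t. ereal (psi \<beta> (mud (zinf \<beta>) + eps t)))"
    using lim_imp_Liminf[OF _ tl] by simp
  also have "\<dots> \<le> liminf (\<lambda>t. ereal (EV (sd_policy (dgr \<beta>)) t))"
    by (rule Liminf_mono) (simp add: le)
  finally show ?thesis .
qed

lemma main_loc:
  "\<exists>d :: nat \<Rightarrow> 'a. liminf (\<lambda>t. ereal (EVaR \<alpha> (return_dist K r (sd_policy d) \<mu> t)))
         = (SUP \<pi> :: 'a policy. liminf (\<lambda>t. ereal (EVaR \<alpha> (return_dist K r \<pi> \<mu> t))))"
proof -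
  define D where "D = PiE St (\<lambda>_. UNIV :: 'a set)"
  have finD: "finite D" unfolding D_def by (intro finite_PiE) auto
  have neD: "D \<noteq> {}" using dgr_PiE[of 1] unfolding D_def by blast
  define Lf where "Lf d = liminf (\<lambda>t. ereal (EV (sd_policy d) t))" for d
  have "Max (Lf ` D) \<in> Lf ` D" by (rule Max_in) (use finD neD in auto)
  then obtain ds where ds: "ds \<in> D" "Lf ds = Max (Lf ` D)" by auto
  have dmax: "Lf d \<le> Lf ds" if "d \<in> D" for d unfolding ds(2) by (rule Max_ge) (use finD that in auto)
  have up: "liminf (\<lambda>t. ereal (EV \<pi> t)) \<le> Lf ds" for \<pi>
  proof (rule liminf_upper)
    fix \<beta> :: real assume b: "0 < \<beta>" and Z: "Zfin \<beta>"
    have "ereal (psi \<beta> (mud (zinf \<beta>))) \<le> Lf (dgr \<beta>)" unfolding Lf_def by (rule Lf_ge[OF b Z])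
    also have "\<dots> \<le> Lf ds" by (rule dmax) (use dgr_PiE in \<open>simp add: D_def\<close>)
    finally show "ereal (psi \<beta> (mud (zinf \<beta>))) \<le> Lf ds" .
  qed
  have "Lf ds = (SUP \<pi> :: 'a policy. liminf (\<lambda>t. ereal (EV \<pi> t)))"
  proof (rule antisym)
    show "Lf ds \<le> (SUP \<pi> :: 'a policy. liminf (\<lambda>t. ereal (EV \<pi> t)))"
      unfolding Lf_def by (rule SUP_upper) simp
    show "(SUP \<pi> :: 'a policy. liminf (\<lambda>t. ereal (EV \<pi> t))) \<le> Lf ds"
      by (rule SUP_least) (rule up)
  qed
  then show ?thesis unfolding Lf_def EV_def by blast
qed

end

theorem corollary3:
  fixes S :: nat
    and K :: "nat \<Rightarrow> 'a::finite \<Rightarrow> nat pmf"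
    and r :: "nat \<Rightarrow> 'a \<Rightarrow> nat \<Rightarrow> real"
    and \<mu> :: "nat pmf"
    and \<alpha> :: real
  assumes "0 < \<alpha>" and "\<alpha> < 1"
    and "sink_mdp S K r"
    and "transient S K"
    and "set_pmf \<mu> = {1..S}"
  shows "\<exists>d :: nat \<Rightarrow> 'a.
           liminf (\<lambda>t. ereal (EVaR \<alpha> (return_dist K r (sd_policy d) \<mu> t)))
         = (SUP \<pi> :: 'a policy. liminf (\<lambda>t. ereal (EVaR \<alpha> (return_dist K r \<pi> \<mu> t))))"
proof -
  interpret emdp S K r \<mu> \<alpha>
    by (rule emdp.intro) (rule assms)+
  show ?thesis by (rule main_loc)
qed

end
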